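(* Let $c\in\mathbb{R}$ and let $Z=(U,V,W)\in H^1(\mathbb{R})^3$ (a function of $x$ only) satisfy, for all $\phi\in\mathcal{C}_0^\infty(\mathbb{R}^+\times\mathbb{R})$, $$\langle -cU,(1-\partial_x^2)\phi_x\rangle+\langle U_x(V+W),\phi_{xx}\rangle-\tfrac12\langle U^2,\phi_{xxx}\rangle+\langle \tfrac32U^2+\tfrac12U_x^2+U(V+W)+U_x(V+W)_x+\tfrac12(V^2+W^2-V_x^2-W_x^2),\phi_x\rangle=0,$$ $$\langle -cV,(1-\partial_x^2)\phi_x\rangle+\langle V_x(U+W),\phi_{xx}\rangle-\tfrac12\langle V^2,\phi_{xxx}\rangle+\langle \tfrac32V^2+\tfrac12V_x^2+V(U+W)+V_x(U+W)_x+\tfrac12(U^2+W^2-U_x^2-W_x^2),\phi_x\rangle=0,$$ $$\langle -cW,(1-\partial_x^2)\phi_x\rangle+\langle W_x(U+V),\phi_{xx}\rangle-\tfrac12\langle W^2,\phi_{xxx}\rangle+\langle \tfrac32W^2+\tfrac12W_x^2+W(U+V)+W_x(U+V)_x+\tfrac12(U^2+V^2-U_x^2-V_x^2),\phi_x\rangle=0.$$ Then for any fixed $t_0\in\mathbb{R}^+$, the function $z(t,x)=Z(x-c(t-t_0))$ is a weak solution of the three-component Camassa--Holm system.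
   Context: $\langle F,\phi\rangle=\int_{\mathbb{R}^+}\int_{\mathbb{R}}F(t,x)\phi(t,x)\,dx\,dt$ denotes the distributional pairing in $(t,x)$. Let $\mathcal{N}=\mathcal{C}(\mathbb{R}^+;H^1(\mathbb{R})^3)$. A function $z=(u,v,w)\in\mathcal{N}$ is a weak solution of the three-component Camassa--Holm system if for all $\phi\in\mathcal{C}_0^\infty(\mathbb{R}^+\times\mathbb{R})$: $\langle u,(1-\partial_x^2)\phi_t\rangle+\langle u_x(v+w),\phi_{xx}\rangle-\frac12\langle u^2,\phi_{xxx}\rangle+\langle\frac32u^2+\frac12u_x^2+u(v+w)+u_x(v+w)_x+\frac12(v^2+w^2-v_x^2-w_x^2),\phi_x\rangle=0$, $\langle v,(1-\partial_x^2)\phi_t\rangle+\langle v_x(u+w),\phi_{xx}\rangle-\frac12\langle v^2,\phi_{xxx}\rangle+\langle\frac32v^2+\frac12v_x^2+v(u+w)+v_x(u+w)_x+\frac12(u^2+w^2-u_x^2-w_x^2),\phi_x\rangle=0$, $\langle w,(1-\partial_x^2)\phi_t\rangle+\langle w_x(u+v),\phi_{xx}\rangle-\frac12\langle w^2,\phi_{xxx}\rangle+\langle\frac32w^2+\frac12w_x^2+w(u+v)+w_x(u+v)_x+\frac12(u^2+v^2-u_x^2-v_x^2),\phi_x\rangle=0$. (This is the weak form of $m_t-m_xu+2mu_x+(mv+mw)_x+nv_x+lw_x=0$ and its two cyclic analogues, with $m=u-u_{xx}$, $n=v-v_{xx}$, $l=w-w_{xx}$.) *)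

theory Defs
  imports "HOL-Analysis.Analysis"
begin

definition pdt :: "(real \<times> real \<Rightarrow> real) \<Rightarrow> real \<times> real \<Rightarrow> real" where
  "pdt f = (\<lambda>p. deriv (\<lambda>s. f (s, snd p)) (fst p))"

definition pdx :: "(real \<times> real \<Rightarrow> real) \<Rightarrow> real \<times> real \<Rightarrow> real" where
  "pdx f = (\<lambda>p. deriv (\<lambda>y. f (fst p, y)) (snd p))"

fun iter_pd :: "bool list \<Rightarrow> (real \<times> real \<Rightarrow> real) \<Rightarrow> real \<times> real \<Rightarrow> real" where
  "iter_pd [] f = f"
| "iter_pd (b # bs) f = (if b then pdt else pdx) (iter_pd bs f)"

definition smooth2 :: "(real \<times> real \<Rightarrow> real) \<Rightarrow> bool" where
  "smooth2 f \<longleftrightarrow> (\<forall>ds. continuous_on UNIV (iter_pd ds f) \<and>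
      (\<forall>t x. (\<lambda>s. iter_pd ds f (s, x)) differentiable (at t) \<and>
             (\<lambda>y. iter_pd ds f (t, y)) differentiable (at x)))"

definition test_fun :: "(real \<times> real \<Rightarrow> real) \<Rightarrow> bool" where
  "test_fun \<phi> \<longleftrightarrow> smooth2 \<phi> \<and> compact (closure {p. \<phi> p \<noteq> 0}) \<and>
      closure {p. \<phi> p \<noteq> 0} \<subseteq> {0<..} \<times> UNIV"

definition test_fun1 :: "(real \<Rightarrow> real) \<Rightarrow> bool" where
  "test_fun1 \<psi> \<longleftrightarrow> (\<forall>n x. ((deriv ^^ n) \<psi>) differentiable (at x)) \<and>
      compact (closure {x. \<psi> x \<noteq> 0})"

definition L2 :: "(real \<Rightarrow> real) \<Rightarrow> bool" where
  "L2 f \<longleftrightarrow> f \<in> borel_measurable lborel \<and> integrable lborel (\<lambda>x. (f x)\<^sup>2)"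

definition H1_deriv :: "(real \<Rightarrow> real) \<Rightarrow> (real \<Rightarrow> real) \<Rightarrow> bool" where
  "H1_deriv f g \<longleftrightarrow> L2 f \<and> L2 g \<and>
     (\<forall>\<psi>. test_fun1 \<psi> \<longrightarrow>
        (LINT x|lborel. f x * deriv \<psi> x) = - (LINT x|lborel. g x * \<psi> x))"

definition H1_dist :: "(real \<Rightarrow> real) \<Rightarrow> (real \<Rightarrow> real) \<Rightarrow> (real \<Rightarrow> real) \<Rightarrow> (real \<Rightarrow> real) \<Rightarrow> real" where
  "H1_dist f fx g gx = sqrt ((LINT x|lborel. (f x - g x)\<^sup>2) + (LINT x|lborel. (fx x - gx x)\<^sup>2))"

definition pair :: "(real \<Rightarrow> real \<Rightarrow> real) \<Rightarrow> (real \<times> real \<Rightarrow> real) \<Rightarrow> real" where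
  "pair F \<phi> = (LINT t:{0<..}|lborel. (LINT x|lborel. F t x * \<phi> (t, x)))"

definition Lop :: "(real \<times> real \<Rightarrow> real) \<Rightarrow> real \<times> real \<Rightarrow> real" where
  "Lop f = (\<lambda>p. f p - pdx (pdx f) p)"

definition CH_rest :: "(real \<Rightarrow> real \<Rightarrow> real) \<Rightarrow> (real \<Rightarrow> real \<Rightarrow> real) \<Rightarrow>
    (real \<Rightarrow> real \<Rightarrow> real) \<Rightarrow> (real \<Rightarrow> real \<Rightarrow> real) \<Rightarrow>
    (real \<Rightarrow> real \<Rightarrow> real) \<Rightarrow> (real \<Rightarrow> real \<Rightarrow> real) \<Rightarrow> (real \<times> real \<Rightarrow> real) \<Rightarrow> real" where
  "CH_rest u ux v vx w wx \<phi> =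
     pair (\<lambda>t x. ux t x * (v t x + w t x)) (pdx (pdx \<phi>))
     - 1/2 * pair (\<lambda>t x. (u t x)\<^sup>2) (pdx (pdx (pdx \<phi>)))
     + pair (\<lambda>t x. 3/2 * (u t x)\<^sup>2 + 1/2 * (ux t x)\<^sup>2 + u t x * (v t x + w t x)
                 + ux t x * (vx t x + wx t x)
                 + 1/2 * ((v t x)\<^sup>2 + (w t x)\<^sup>2 - (vx t x)\<^sup>2 - (wx t x)\<^sup>2)) (pdx \<phi>)"

text \<open>Weak solution z = (u,v,w) \<in> C(R^+; H^1(R)^3) of the three-component CH system.
  ux, vx, wx are the (a.e. unique) weak x-derivatives.\<close>
definition CH3_weak_solution :: "(real \<Rightarrow> real \<Rightarrow> real) \<Rightarrow> (real \<Rightarrow> real \<Rightarrow> real) \<Rightarrow>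
    (real \<Rightarrow> real \<Rightarrow> real) \<Rightarrow> bool" where
  "CH3_weak_solution u v w \<longleftrightarrow> (\<exists>ux vx wx.
     (\<forall>t>0. H1_deriv (u t) (ux t) \<and> H1_deriv (v t) (vx t) \<and> H1_deriv (w t) (wx t)) \<and>
     (\<forall>t0>0. \<forall>\<epsilon>>0. \<exists>\<delta>>0. \<forall>t>0. \<bar>t - t0\<bar> < \<delta> \<longrightarrow>
        H1_dist (u t) (ux t) (u t0) (ux t0) < \<epsilon> \<and>
        H1_dist (v t) (vx t) (v t0) (vx t0) < \<epsilon> \<and>
        H1_dist (w t) (wx t) (w t0) (wx t0) < \<epsilon>) \<and>
     (\<forall>\<phi>. test_fun \<phi> \<longrightarrow>
        pair u (Lop (pdt \<phi>)) + CH_rest u ux v vx w wx \<phi> = 0 \<and>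
        pair v (Lop (pdt \<phi>)) + CH_rest v vx u ux w wx \<phi> = 0 \<and>
        pair w (Lop (pdt \<phi>)) + CH_rest w wx u ux v vx \<phi> = 0))"

end

theory Submission
  imports Defs
begin

lemma iter_pd_append: "iter_pd (ds @ es) f = iter_pd ds (iter_pd es f)"
  by (induction ds) auto

lemma iter_pd_F: "iter_pd ds (pdx f) = iter_pd (ds @ [False]) f"
  by (simp add: iter_pd_append)
lemma iter_pd_T: "iter_pd ds (pdt f) = iter_pd (ds @ [True]) f"
  by (simp add: iter_pd_append)

lemma smooth2_iter: "smooth2 f \<Longrightarrow> smooth2 (iter_pd es f)"
  unfolding smooth2_def iter_pd_append[symmetric] by blast

lemma smooth2_pdx: "smooth2 f \<Longrightarrow> smooth2 (pdx f)"
  using smooth2_iter[of f "[False]"] by simp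

lemma smooth2_pdt: "smooth2 f \<Longrightarrow> smooth2 (pdt f)"
  using smooth2_iter[of f "[True]"] by simp

lemma smooth2_cont: "smooth2 f \<Longrightarrow> continuous_on UNIV f"
  unfolding smooth2_def by (metis iter_pd.simps(1))

lemma smooth2_dt: "smooth2 f \<Longrightarrow> ((\<lambda>s. f (s, x)) has_real_derivative pdt f (t, x)) (at t)"
  unfolding smooth2_def pdt_def
  by (metis DERIV_deriv_iff_real_differentiable fst_conv iter_pd.simps(1) snd_conv)

lemma smooth2_dx: "smooth2 f \<Longrightarrow> ((\<lambda>y. f (t, y)) has_real_derivative pdx f (t, x)) (at x)"
  unfolding smooth2_def pdx_def
  by (metis DERIV_deriv_iff_real_differentiable fst_conv iter_pd.simps(1) snd_conv)

lemma iter_pd_lin: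
  assumes "smooth2 f" "smooth2 g"
  shows "iter_pd ds (\<lambda>p. f p + a * g p) = (\<lambda>p. iter_pd ds f p + a * iter_pd ds g p)"
proof (induction ds)
  case Nil then show ?case by simp
next
  case (Cons b ds)
  have sf: "smooth2 (iter_pd ds f)" and sg: "smooth2 (iter_pd ds g)"
    using assms smooth2_iter by blast+
  show ?case
  proof (cases b)
    case True
    have "pdt (\<lambda>p. iter_pd ds f p + a * iter_pd ds g p) p = pdt (iter_pd ds f) p + a * pdt (iter_pd ds g) p" for p
    proof -
      have "((\<lambda>s. iter_pd ds f (s, snd p) + a * iter_pd ds g (s, snd p)) has_real_derivative
         pdt (iter_pd ds f) (fst p, snd p) + a * pdt (iter_pd ds g) (fst p, snd p)) (at (fst p))"
        by (intro DERIV_add DERIV_cmult smooth2_dt sf sg)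
      then show ?thesis unfolding pdt_def[of "\<lambda>p. iter_pd ds f p + a * iter_pd ds g p"]
        by (simp add: DERIV_imp_deriv)
    qed
    then show ?thesis using True Cons by simp
  next
    case False
    have "pdx (\<lambda>p. iter_pd ds f p + a * iter_pd ds g p) p = pdx (iter_pd ds f) p + a * pdx (iter_pd ds g) p" for p
    proof -
      have "((\<lambda>y. iter_pd ds f (fst p, y) + a * iter_pd ds g (fst p, y)) has_real_derivative
         pdx (iter_pd ds f) (fst p, snd p) + a * pdx (iter_pd ds g) (fst p, snd p)) (at (snd p))"
        by (intro DERIV_add DERIV_cmult smooth2_dx sf sg)
      then show ?thesis unfolding pdx_def[of "\<lambda>p. iter_pd ds f p + a * iter_pd ds g p"]
        by (simp add: DERIV_imp_deriv)
    qed
    then show ?thesis using False Cons by simp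
  qed
qed

lemma smooth2_lin:
  assumes "smooth2 f" "smooth2 g"
  shows "smooth2 (\<lambda>p. f p + a * g p)"
  unfolding smooth2_def iter_pd_lin[OF assms]
proof (intro allI conjI)
  fix ds t x
  have sf: "smooth2 (iter_pd ds f)" and sg: "smooth2 (iter_pd ds g)"
    using assms smooth2_iter by blast+
  show "continuous_on UNIV (\<lambda>p. iter_pd ds f p + a * iter_pd ds g p)"
    using smooth2_cont[OF sf] smooth2_cont[OF sg] by (intro continuous_intros)
  show "(\<lambda>s. iter_pd ds f (s, x) + a * iter_pd ds g (s, x)) differentiable at t"
  proof -
    have "((\<lambda>s. iter_pd ds f (s, x) + a * iter_pd ds g (s, x)) has_real_derivative pdt (iter_pd ds f) (t,x) + a * pdt (iter_pd ds g) (t,x)) (at t)"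
      by (intro DERIV_add DERIV_cmult smooth2_dt sf sg)
    thus ?thesis using real_differentiable_def by blast
  qed
  show "(\<lambda>y. iter_pd ds f (t, y) + a * iter_pd ds g (t, y)) differentiable at x"
  proof -
    have "((\<lambda>y. iter_pd ds f (t, y) + a * iter_pd ds g (t, y)) has_real_derivative pdx (iter_pd ds f) (t,x) + a * pdx (iter_pd ds g) (t,x)) (at x)"
      by (intro DERIV_add DERIV_cmult smooth2_dx sf sg)
    thus ?thesis using real_differentiable_def by blast
  qed
qed

lemma smooth2_frechet:
  assumes f: "smooth2 f"
  shows "(f has_derivative (\<lambda>(h,k). pdt f p * h + pdx f p * k)) (at p)"
proof -
  obtain x y where p: "p = (x, y)" by (cases p)
  have cx: "continuous_on UNIV (pdx f)" using smooth2_cont[OF smooth2_pdx[OF f]] .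
  have "((\<lambda>(x, y). f (x, y)) has_derivative (\<lambda>(tx, ty). pdt f (x,y) * tx + blinfun_apply (blinfun_mult_right (pdx f (x, y))) ty)) (at (x, y) within UNIV \<times> UNIV)"
  proof (rule has_derivative_partialsI)
    show "((\<lambda>x. f (x, y)) has_derivative (*) (pdt f (x, y))) (at x within UNIV)"
      using smooth2_dt[OF f, of y x] by (simp add: has_field_derivative_def)
    show "((\<lambda>y. f (x, y)) has_derivative blinfun_apply (blinfun_mult_right (pdx f (x, y)))) (at y within UNIV)"
      if "x \<in> UNIV" "y \<in> UNIV" for x y
      using smooth2_dx[OF f, of x y] by (simp add: has_field_derivative_def)
    have "continuous (at (x, y)) (pdx f)"
      using cx by (simp add: continuous_on_eq_continuous_at)
    then have "continuous (at (x, y)) (\<lambda>p. blinfun_mult_right (pdx f p))"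
      by (rule bounded_linear.continuous[OF bounded_linear_blinfun_mult_right])
    then show "continuous (at (x, y) within UNIV \<times> UNIV) (\<lambda>(x, y). blinfun_mult_right (pdx f (x, y)))"
      by (simp add: case_prod_beta')
  qed auto
  then show ?thesis using p by (simp add: case_prod_beta')
qed

definition Sh :: "real \<Rightarrow> real \<Rightarrow> real \<times> real \<Rightarrow> real \<times> real" where
  "Sh c t0 p = (fst p, snd p + c * (fst p - t0))"

lemma comp_dt:
  assumes f: "smooth2 f"
  shows "((\<lambda>s. f (Sh c t0 (s, y))) has_real_derivative (pdt f (Sh c t0 (s0, y)) + c * pdx f (Sh c t0 (s0, y)))) (at s0)"
proof -
  have g: "((\<lambda>s. (s, y + c * (s - t0))) has_derivative (\<lambda>h. (h, c * h))) (at s0)"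
    by (auto intro!: derivative_eq_intros)
  have "((f \<circ> (\<lambda>s. (s, y + c * (s - t0)))) has_derivative
      ((\<lambda>(h,k). pdt f (s0, y + c * (s0 - t0)) * h + pdx f (s0, y + c * (s0 - t0)) * k) \<circ> (\<lambda>h. (h, c * h)))) (at s0)"
    by (rule diff_chain_at[OF g smooth2_frechet[OF f]])
  moreover have "(\<lambda>(h,k). pdt f (s0, y + c * (s0 - t0)) * h + pdx f (s0, y + c * (s0 - t0)) * k) \<circ> (\<lambda>h. (h, c * h))
     = (*) (pdt f (Sh c t0 (s0, y)) + c * pdx f (Sh c t0 (s0, y)))"
    by (simp add: fun_eq_iff Sh_def algebra_simps)
  moreover have "f \<circ> (\<lambda>s. (s, y + c * (s - t0))) = (\<lambda>s. f (Sh c t0 (s, y)))"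
    by (simp add: fun_eq_iff Sh_def)
  ultimately show ?thesis
    by (simp only: has_field_derivative_def)
qed

lemma comp_dx:
  assumes f: "smooth2 f"
  shows "((\<lambda>y. f (Sh c t0 (s, y))) has_real_derivative pdx f (Sh c t0 (s, y0))) (at y0)"
proof -
  have "((\<lambda>y. f (s, y)) has_real_derivative pdx f (s, y0 + c * (s - t0))) (at (y0 + c * (s - t0)))"
    using smooth2_dx[OF f] .
  moreover have "((\<lambda>y. y + c * (s - t0)) has_real_derivative 1) (at y0)"
    by (auto intro!: derivative_eq_intros)
  ultimately have "((\<lambda>y. f (s, y + c * (s - t0))) has_real_derivative pdx f (s, y0 + c * (s - t0)) * 1) (at y0)"
    by (rule DERIV_chain2)
  then show ?thesis unfolding Sh_def by simp
qed

lemma pdt_comp: "smooth2 f \<Longrightarrow> pdt (\<lambda>p. f (Sh c t0 p)) = (\<lambda>p. pdt f (Sh c t0 p) + c * pdx f (Sh c t0 p))"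
  unfolding pdt_def[of "\<lambda>p. f (Sh c t0 p)"]
proof (rule ext)
  fix p assume f: "smooth2 f"
  show "deriv (\<lambda>s. f (Sh c t0 (s, snd p))) (fst p) = pdt f (Sh c t0 p) + c * pdx f (Sh c t0 p)"
    using comp_dt[OF f, of c t0 "snd p" "fst p"] by (simp add: DERIV_imp_deriv)
qed

lemma pdx_comp: "smooth2 f \<Longrightarrow> pdx (\<lambda>p. f (Sh c t0 p)) = (\<lambda>p. pdx f (Sh c t0 p))"
  unfolding pdx_def[of "\<lambda>p. f (Sh c t0 p)"]
proof (rule ext)
  fix p assume f: "smooth2 f"
  show "deriv (\<lambda>y. f (Sh c t0 (fst p, y))) (snd p) = pdx f (Sh c t0 p)"
    using comp_dx[OF f, of c t0 "fst p" "snd p"] by (simp add: DERIV_imp_deriv)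
qed

lemma cont_Sh: "continuous_on UNIV (Sh c t0)"
  unfolding Sh_def by (intro continuous_intros)

lemma smooth2_comp_aux:
  "\<forall>f. smooth2 f \<longrightarrow> (\<exists>g. smooth2 g \<and> iter_pd ds (\<lambda>p. f (Sh c t0 p)) = (\<lambda>p. g (Sh c t0 p)))"
proof (induction ds rule: rev_induct)
  case Nil then show ?case by auto
next
  case (snoc b ds)
  show ?case
  proof (intro allI impI)
    fix f assume f: "smooth2 f"
    show "\<exists>g. smooth2 g \<and> iter_pd (ds @ [b]) (\<lambda>p. f (Sh c t0 p)) = (\<lambda>p. g (Sh c t0 p))"
    proof (cases b)
      case True
      have "iter_pd (ds @ [b]) (\<lambda>p. f (Sh c t0 p)) = iter_pd ds (\<lambda>p. pdt f (Sh c t0 p) + c * pdx f (Sh c t0 p))"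
        using True f by (simp add: iter_pd_append pdt_comp)
      moreover have "smooth2 (\<lambda>q. pdt f q + c * pdx f q)"
        by (intro smooth2_lin smooth2_pdt smooth2_pdx f)
      ultimately show ?thesis using snoc.IH by auto
    next
      case False
      have "iter_pd (ds @ [b]) (\<lambda>p. f (Sh c t0 p)) = iter_pd ds (\<lambda>p. pdx f (Sh c t0 p))"
        using False f by (simp add: iter_pd_append pdx_comp)
      moreover have "smooth2 (pdx f)"
        by (intro smooth2_pdx f)
      ultimately show ?thesis using snoc.IH by auto
    qed
  qed
qed

lemma smooth2_comp: assumes f: "smooth2 f" shows "smooth2 (\<lambda>p. f (Sh c t0 p))"
  unfolding smooth2_def
proof (intro allI conjI)
  fix ds t x
  obtain g where g: "smooth2 g" and eq: "iter_pd ds (\<lambda>p. f (Sh c t0 p)) = (\<lambda>p. g (Sh c t0 p))"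
    using smooth2_comp_aux f by blast
  show "continuous_on UNIV (iter_pd ds (\<lambda>p. f (Sh c t0 p)))"
    unfolding eq using continuous_on_compose2[OF smooth2_cont[OF g] cont_Sh] by simp
  show "(\<lambda>s. iter_pd ds (\<lambda>p. f (Sh c t0 p)) (s, x)) differentiable at t"
    unfolding eq using comp_dt[OF g] real_differentiable_def by blast
  show "(\<lambda>y. iter_pd ds (\<lambda>p. f (Sh c t0 p)) (t, y)) differentiable at x"
    unfolding eq using comp_dx[OF g] real_differentiable_def by blast
qed

lemma Sh_inv: "Sh c t0 (Sh (-c) t0 p) = p" "Sh (-c) t0 (Sh c t0 p) = p"
  unfolding Sh_def by (auto simp: algebra_simps)

lemma closure_homeo_image:
  assumes cf: "continuous_on UNIV f" and cg: "continuous_on UNIV g"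
    and fg: "\<And>x. f (g x) = x" and gf: "\<And>x. g (f x) = x"
  shows "closure (f ` X) = f ` closure X"
proof
  show "f ` closure X \<subseteq> closure (f ` X)"
    using continuous_image_closure_subset[OF cf, of X] by simp
  show "closure (f ` X) \<subseteq> f ` closure X"
  proof
    fix x assume x: "x \<in> closure (f ` X)"
    have "g ` closure (f ` X) \<subseteq> closure (g ` f ` X)"
      using continuous_image_closure_subset[OF cg, of "f ` X"] by simp
    moreover have "g ` f ` X = X" using gf by (simp add: image_image)
    ultimately have "g x \<in> closure X" using x by auto
    then have "f (g x) \<in> f ` closure X" by (rule imageI)
    then show "x \<in> f ` closure X" using fg by simp
  qed
qed

lemma supp_Sh: "{p. \<phi> (Sh c t0 p) \<noteq> 0} = Sh (-c) t0 ` {p. \<phi> p \<noteq> 0}"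
proof -
  have "{p. \<phi> (Sh c t0 p) \<noteq> 0} = Sh (-c) t0 ` {p. \<phi> p \<noteq> 0}"
  proof
    show "{p. \<phi> (Sh c t0 p) \<noteq> 0} \<subseteq> Sh (-c) t0 ` {p. \<phi> p \<noteq> 0}"
    proof
      fix p assume "p \<in> {p. \<phi> (Sh c t0 p) \<noteq> 0}"
      then have "Sh c t0 p \<in> {p. \<phi> p \<noteq> 0}" by simp
      then have "Sh (-c) t0 (Sh c t0 p) \<in> Sh (-c) t0 ` {p. \<phi> p \<noteq> 0}" by (rule imageI)
      then show "p \<in> Sh (-c) t0 ` {p. \<phi> p \<noteq> 0}" by (simp add: Sh_inv)
    qed
    show "Sh (-c) t0 ` {p. \<phi> p \<noteq> 0} \<subseteq> {p. \<phi> (Sh c t0 p) \<noteq> 0}"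
      using Sh_inv by auto
  qed
  then show ?thesis .
qed

lemma pd_vanish:
  assumes K: "closed K" and z: "\<And>p. p \<notin> K \<Longrightarrow> f p = 0" and p: "p \<notin> K"
  shows "pdx f p = 0" "pdt f p = 0"
proof -
  have "open (- K)" using K by (simp add: open_Compl)
  then obtain r where r: "r > 0" "ball p r \<subseteq> - K"
    using p open_contains_ball_eq[of "- K" p] by auto
  have ev1: "\<forall>\<^sub>F y in nhds (snd p). f (fst p, y) = 0"
  proof -
    have "\<forall>\<^sub>F y in nhds (snd p). y \<in> ball (snd p) r" using r by (intro eventually_nhds_in_open) auto
    then show ?thesis
    proof (rule eventually_mono)
      fix y assume "y \<in> ball (snd p) r"
      then have "(fst p, y) \<in> ball p r" by (cases p) (simp add: dist_Pair_Pair)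
      then show "f (fst p, y) = 0" using r z by auto
    qed
  qed
  have "((\<lambda>y. f (fst p, y)) has_real_derivative 0) (at (snd p))"
  proof (rule has_field_derivative_cong_ev[THEN iffD1])
    show "((\<lambda>y. 0) has_real_derivative 0) (at (snd p))" by simp
    show "\<forall>\<^sub>F x in nhds (snd p). x \<in> UNIV \<longrightarrow> 0 = f (fst p, x)" using ev1 by (auto elim!: eventually_mono)
  qed auto
  then show "pdx f p = 0" unfolding pdx_def by (rule DERIV_imp_deriv)
  have ev2: "\<forall>\<^sub>F s in nhds (fst p). f (s, snd p) = 0"
  proof -
    have "\<forall>\<^sub>F s in nhds (fst p). s \<in> ball (fst p) r" using r by (intro eventually_nhds_in_open) auto
    then show ?thesis
    proof (rule eventually_mono)
      fix s assume "s \<in> ball (fst p) r"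
      then have "(s, snd p) \<in> ball p r" by (cases p) (simp add: dist_Pair_Pair)
      then show "f (s, snd p) = 0" using r z by auto
    qed
  qed
  have "((\<lambda>s. f (s, snd p)) has_real_derivative 0) (at (fst p))"
  proof (rule has_field_derivative_cong_ev[THEN iffD1])
    show "((\<lambda>s. 0) has_real_derivative 0) (at (fst p))" by simp
    show "\<forall>\<^sub>F x in nhds (fst p). x \<in> UNIV \<longrightarrow> 0 = f (x, snd p)" using ev2 by (auto elim!: eventually_mono)
  qed auto
  then show "pdt f p = 0" unfolding pdt_def by (rule DERIV_imp_deriv)
qed

lemma iter_vanish:
  assumes "p \<notin> closure {p. \<phi> p \<noteq> 0}"
  shows "iter_pd ds \<phi> p = 0"
  using assms
proof (induction ds arbitrary: p)
  case Nil
  have "{p. \<phi> p \<noteq> 0} \<subseteq> closure {p. \<phi> p \<noteq> 0}" by (rule closure_subset)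
  then have "p \<notin> {p. \<phi> p \<noteq> 0}" using Nil by (rule contra_subsetD)
  then show ?case by simp
next
  case (Cons b ds)
  have IH: "\<And>q. q \<notin> closure {p. \<phi> p \<noteq> 0} \<Longrightarrow> iter_pd ds \<phi> q = 0" by (rule Cons.IH)
  have "pdx (iter_pd ds \<phi>) p = 0" by (rule pd_vanish(1)[OF closed_closure IH Cons.prems])
  moreover have "pdt (iter_pd ds \<phi>) p = 0" by (rule pd_vanish(2)[OF closed_closure IH Cons.prems])
  ultimately show ?case by simp
qed

lemma dist_pair_le: "dist (a::real, b::real) (c, d) \<le> \<bar>a - c\<bar> + \<bar>b - d\<bar>"
proof -
  have "dist (a, b) (c, d) = norm (a - c, b - d)" by (simp add: dist_norm)
  also have "\<dots> \<le> norm (a - c) + norm (b - d)" by (rule norm_Pair_le)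
  finally show ?thesis by simp
qed

lemma clairaut_pt:
  assumes f: "smooth2 f"
  shows "pdx (pdt f) (t, y) = pdt (pdx f) (t, y)"
proof (rule ccontr)
  define P where "P = pdx (pdt f)"
  define Q where "Q = pdt (pdx f)"
  have sA: "smooth2 (pdt f)" and sB: "smooth2 (pdx f)" using f by (simp_all add: smooth2_pdt smooth2_pdx)
  have cP: "continuous_on UNIV P" unfolding P_def by (intro smooth2_cont smooth2_pdx sA)
  have cQ: "continuous_on UNIV Q" unfolding Q_def by (intro smooth2_cont smooth2_pdt sB)
  assume ne: "pdx (pdt f) (t, y) \<noteq> pdt (pdx f) (t, y)"
  define e where "e = \<bar>P (t, y) - Q (t, y)\<bar> / 2"
  have e: "e > 0" using ne unfolding e_def P_def Q_def by simp
  have "isCont P (t, y)" using cP by (simp add: continuous_on_eq_continuous_at)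
  then obtain d1 where d1: "d1 > 0" "\<And>p. dist p (t, y) < d1 \<Longrightarrow> dist (P p) (P (t, y)) < e"
    using e unfolding continuous_at_eps_delta by blast
  have "isCont Q (t, y)" using cQ by (simp add: continuous_on_eq_continuous_at)
  then obtain d2 where d2: "d2 > 0" "\<And>p. dist p (t, y) < d2 \<Longrightarrow> dist (Q p) (Q (t, y)) < e"
    using e unfolding continuous_at_eps_delta by blast
  define h where "h = min d1 d2 / 4"
  have h: "h > 0" "2 * h < d1" "2 * h < d2" using d1 d2 unfolding h_def by auto
  define D where "D = f (t + h, y + h) - f (t + h, y) - f (t, y + h) + f (t, y)"
  obtain \<xi> where \<xi>: "t < \<xi>" "\<xi> < t + h"
    and e1: "(f (t + h, y + h) - f (t + h, y)) - (f (t, y + h) - f (t, y)) = h * (pdt f (\<xi>, y + h) - pdt f (\<xi>, y))"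
  proof -
    have d: "\<And>s. t \<le> s \<Longrightarrow> s \<le> t + h \<Longrightarrow> ((\<lambda>s. f (s, y + h) - f (s, y)) has_real_derivative (pdt f (s, y + h) - pdt f (s, y))) (at s)"
      by (intro DERIV_diff smooth2_dt f)
    from MVT2[where a=t and b="t + h", OF _ d] h show ?thesis using that by auto
  qed
  obtain \<eta> where \<eta>: "y < \<eta>" "\<eta> < y + h"
    and e2: "pdt f (\<xi>, y + h) - pdt f (\<xi>, y) = h * P (\<xi>, \<eta>)"
  proof -
    have d: "\<And>z. y \<le> z \<Longrightarrow> z \<le> y + h \<Longrightarrow> ((\<lambda>z. pdt f (\<xi>, z)) has_real_derivative P (\<xi>, z)) (at z)"
      unfolding P_def by (intro smooth2_dx sA)
    from MVT2[where a=y and b="y + h", OF _ d] h show ?thesis using that by auto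
  qed
  obtain \<eta>' where \<eta>': "y < \<eta>'" "\<eta>' < y + h"
    and e3: "(f (t + h, y + h) - f (t, y + h)) - (f (t + h, y) - f (t, y)) = h * (pdx f (t + h, \<eta>') - pdx f (t, \<eta>'))"
  proof -
    have d: "\<And>z. y \<le> z \<Longrightarrow> z \<le> y + h \<Longrightarrow> ((\<lambda>z. f (t + h, z) - f (t, z)) has_real_derivative (pdx f (t + h, z) - pdx f (t, z))) (at z)"
      by (intro DERIV_diff smooth2_dx f)
    from MVT2[where a=y and b="y + h", OF _ d] h show ?thesis using that by auto
  qed
  obtain \<xi>' where \<xi>': "t < \<xi>'" "\<xi>' < t + h"
    and e4: "pdx f (t + h, \<eta>') - pdx f (t, \<eta>') = h * Q (\<xi>', \<eta>')"
  proof -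
    have d: "\<And>s. t \<le> s \<Longrightarrow> s \<le> t + h \<Longrightarrow> ((\<lambda>s. pdx f (s, \<eta>')) has_real_derivative Q (s, \<eta>')) (at s)"
      unfolding Q_def by (intro smooth2_dt sB)
    from MVT2[where a=t and b="t + h", OF _ d] h show ?thesis using that by auto
  qed
  have "h * (h * P (\<xi>, \<eta>)) = h * (h * Q (\<xi>', \<eta>'))"
    using e1 e2 e3 e4 by (simp add: algebra_simps)
  then have PQ: "P (\<xi>, \<eta>) = Q (\<xi>', \<eta>')" using h by simp
  have "dist (\<xi>, \<eta>) (t, y) < d1"
    using dist_pair_le[of \<xi> \<eta> t y] \<xi> \<eta> h by linarith
  then have 1: "\<bar>P (\<xi>, \<eta>) - P (t, y)\<bar> < e" using d1 by (simp add: dist_real_def)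
  have "dist (\<xi>', \<eta>') (t, y) < d2"
    using dist_pair_le[of \<xi>' \<eta>' t y] \<xi>' \<eta>' h by linarith
  then have 2: "\<bar>Q (\<xi>', \<eta>') - Q (t, y)\<bar> < e" using d2 by (simp add: dist_real_def)
  show False using 1 2 PQ unfolding e_def by (simp add: abs_if split: if_splits)
qed

lemma clairaut: "smooth2 f \<Longrightarrow> pdx (pdt f) = pdt (pdx f)"
  using clairaut_pt by fastforce

lemma test_box:
  assumes "test_fun \<phi>"
  shows "\<exists>a b R. 0 < a \<and> a < b \<and> closure {p. \<phi> p \<noteq> 0} \<subseteq> {a<..<b} \<times> {-R<..<R}"
proof -
  define K where "K = closure {p. \<phi> p \<noteq> 0}"
  have tf: "compact K \<and> K \<subseteq> {0<..} \<times> UNIV" using assms unfolding test_fun_def K_def by simp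
  have cK: "compact K" using tf by (rule conjunct1)
  have sK: "K \<subseteq> {0<..} \<times> UNIV" using tf by (rule conjunct2)
  obtain R0 where R0: "\<And>q. q \<in> K \<Longrightarrow> norm q \<le> R0"
    using compact_imp_bounded[OF cK] unfolding bounded_iff by blast
  have fb: "\<bar>fst q\<bar> < R0 + 1" "\<bar>snd q\<bar> < R0 + 1" if "q \<in> K" for q
  proof -
    have "norm (fst q) \<le> norm q" using norm_fst_le[of "fst q" "snd q"] by simp
    then show "\<bar>fst q\<bar> < R0 + 1" using R0[OF that] by simp
    have "norm (snd q) \<le> norm q" using norm_snd_le[of "snd q" "fst q"] by simp
    then show "\<bar>snd q\<bar> < R0 + 1" using R0[OF that] by simp
  qed
  show ?thesis
  proof (cases "K = {}")
    case True
    have "K \<subseteq> {1<..<2} \<times> {-1<..<1}" using True by simp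
    then show ?thesis unfolding K_def[symmetric]
      by (intro exI[of _ 1] exI[of _ 2] exI[of _ 1] conjI) simp_all
  next
    case False
    have c: "compact (fst ` K)" by (rule compact_continuous_image[OF continuous_on_fst[OF continuous_on_id] cK])
    have ne: "fst ` K \<noteq> {}" using False by simp
    from compact_attains_inf[OF c ne] obtain m where m: "m \<in> fst ` K" "\<forall>y\<in>fst ` K. m \<le> y"
      by (elim bexE)
    obtain q where q: "q \<in> K" "m = fst q" using m(1) by (elim imageE)
    have "q \<in> {0<..} \<times> UNIV" using sK q(1) by (rule subsetD)
    then have mpos: "m > 0" using q(2) by (cases q) simp
    have mR: "m < R0 + 1" using fb(1)[OF q(1)] q(2) by simp
    have box: "K \<subseteq> {m/2<..<R0 + 1} \<times> {-(R0+1)<..<R0+1}"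
    proof
      fix r assume r: "r \<in> K"
      obtain t x where tx: "r = (t, x)" by (cases r)
      have "m \<le> t" using m(2) r tx by force
      moreover have "\<bar>t\<bar> < R0 + 1" "\<bar>x\<bar> < R0 + 1" using fb[OF r] tx by simp_all
      ultimately show "r \<in> {m/2<..<R0 + 1} \<times> {-(R0+1)<..<R0+1}"
        using mpos tx by (simp add: abs_less_iff)
    qed
    have "0 < m/2" "m/2 < R0 + 1" using mpos mR by simp_all
    then show ?thesis unfolding K_def[symmetric] using box
      by (intro exI[of _ "m/2"] exI[of _ "R0+1"] exI[of _ "R0+1"] conjI)
  qed
qed

definition nice :: "(real \<times> real \<Rightarrow> real) \<Rightarrow> bool" where
  "nice G \<longleftrightarrow> continuous_on UNIV G \<and> (\<exists>B. \<forall>p. \<bar>G p\<bar> \<le> B) \<and>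
     (\<exists>a b R. 0 < a \<and> a < b \<and> (\<forall>t x. (t \<le> a \<or> b \<le> t \<or> R \<le> \<bar>x\<bar>) \<longrightarrow> G (t, x) = 0))"

lemma nice_iter:
  assumes "test_fun \<phi>"
  shows "nice (iter_pd ds \<phi>)"
proof -
  define K where "K = closure {p. \<phi> p \<noteq> 0}"
  have cK: "compact K" using assms unfolding test_fun_def K_def by (elim conjE)
  have sm: "smooth2 (iter_pd ds \<phi>)" using assms unfolding test_fun_def by (simp add: smooth2_iter)
  have cont: "continuous_on UNIV (iter_pd ds \<phi>)" by (rule smooth2_cont[OF sm])
  have "compact (iter_pd ds \<phi> ` K)"
    by (rule compact_continuous_image[OF continuous_on_subset[OF cont] cK]) simp
  then have "bounded (iter_pd ds \<phi> ` K)" by (rule compact_imp_bounded)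
  then obtain B where B0: "\<forall>y\<in>iter_pd ds \<phi> ` K. norm y \<le> B" unfolding bounded_iff by (elim exE)
  have B: "norm (iter_pd ds \<phi> q) \<le> B" if "q \<in> K" for q using B0 that by simp
  have bd: "\<bar>iter_pd ds \<phi> p\<bar> \<le> max B 0" for p
  proof (cases "p \<in> K")
    case True then show ?thesis using B[OF True] by simp
  next
    case False then show ?thesis using iter_vanish[of p \<phi> ds] unfolding K_def by simp
  qed
  obtain a b R where abR: "0 < a" "a < b" "K \<subseteq> {a<..<b} \<times> {-R<..<R}"
    using test_box[OF assms] unfolding K_def by blast
  have z: "iter_pd ds \<phi> (t, x) = 0" if "t \<le> a \<or> b \<le> t \<or> R \<le> \<bar>x\<bar>" for t x
  proof -
    have "(t, x) \<notin> K"
    proof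
      assume "(t, x) \<in> K"
      then have "(t, x) \<in> {a<..<b} \<times> {-R<..<R}" using abR(3) by blast
      then have "a < t" "t < b" "-R < x" "x < R" by auto
      then show False using that by (auto simp: abs_if split: if_splits)
    qed
    then show ?thesis using iter_vanish[of "(t,x)" \<phi> ds] unfolding K_def by simp
  qed
  show ?thesis unfolding nice_def
    by (intro conjI cont exI[of _ "max B 0"] allI bd exI[of _ a] exI[of _ b] exI[of _ R] abR(1) abR(2) impI z)
qed

lemma nice_lin:
  assumes F: "nice F" and G: "nice G"
  shows "nice (\<lambda>p. F p + k * G p)"
proof -
  obtain B1 where B1: "\<And>p. \<bar>F p\<bar> \<le> B1" using F unfolding nice_def by blast
  obtain B2 where B2: "\<And>p. \<bar>G p\<bar> \<le> B2" using G unfolding nice_def by blast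
  obtain a1 b1 R1 where 1: "0 < a1" "a1 < b1" "\<And>t x. t \<le> a1 \<or> b1 \<le> t \<or> R1 \<le> \<bar>x\<bar> \<Longrightarrow> F (t, x) = 0"
    using F unfolding nice_def by blast
  obtain a2 b2 R2 where 2: "0 < a2" "a2 < b2" "\<And>t x. t \<le> a2 \<or> b2 \<le> t \<or> R2 \<le> \<bar>x\<bar> \<Longrightarrow> G (t, x) = 0"
    using G unfolding nice_def by blast
  have cF: "continuous_on UNIV F" using F unfolding nice_def by (elim conjE)
  have cG: "continuous_on UNIV G" using G unfolding nice_def by (elim conjE)
  have cont: "continuous_on UNIV (\<lambda>p. F p + k * G p)"
    by (intro continuous_intros cF cG)
  have bd: "\<bar>F p + k * G p\<bar> \<le> B1 + \<bar>k\<bar> * B2" for p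
  proof -
    have "\<bar>F p + k * G p\<bar> \<le> \<bar>F p\<bar> + \<bar>k * G p\<bar>" by (rule abs_triangle_ineq)
    also have "\<dots> = \<bar>F p\<bar> + \<bar>k\<bar> * \<bar>G p\<bar>" by (simp add: abs_mult)
    also have "\<dots> \<le> B1 + \<bar>k\<bar> * B2" using B1[of p] B2[of p] by (intro add_mono mult_left_mono) auto
    finally show ?thesis .
  qed
  have z: "F (t, x) + k * G (t, x) = 0" if "t \<le> min a1 a2 \<or> max b1 b2 \<le> t \<or> max R1 R2 \<le> \<bar>x\<bar>" for t x
    using 1(3)[of t x] 2(3)[of t x] that by auto
  have "0 < min a1 a2" "min a1 a2 < max b1 b2" using 1 2 by auto
  note ab = this
  show ?thesis unfolding nice_def
  proof (intro conjI)
    show "continuous_on UNIV (\<lambda>p. F p + k * G p)" by (rule cont)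
    show "\<exists>B. \<forall>p. \<bar>F p + k * G p\<bar> \<le> B" using bd by blast
    show "\<exists>a b R. 0 < a \<and> a < b \<and> (\<forall>t x. t \<le> a \<or> b \<le> t \<or> R \<le> \<bar>x\<bar> \<longrightarrow> F (t, x) + k * G (t, x) = 0)"
      apply (rule exI[of _ "min a1 a2"], rule exI[of _ "max b1 b2"], rule exI[of _ "max R1 R2"])
      using ab z by blast
  qed
qed

lemma L2_local:
  assumes "L2 U"
  shows "integrable lborel (\<lambda>x. indicator {-R..R} x * \<bar>U x\<bar>)"
proof (rule Bochner_Integration.integrable_bound)
  have U: "U \<in> borel_measurable lborel" "integrable lborel (\<lambda>x. (U x)\<^sup>2)" using assms unfolding L2_def by auto
  show "integrable lborel (\<lambda>x. (U x)\<^sup>2 + indicator {-R..R} x :: real)"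
    by (rule Bochner_Integration.integrable_add[OF U(2) integrable_real_indicator]) (auto simp: emeasure_lborel_Icc_eq)
  show "(\<lambda>x. indicator {-R..R} x * \<bar>U x\<bar>) \<in> borel_measurable lborel"
    using U(1) by measurable
  show "AE x in lborel. norm (indicator {-R..R} x * \<bar>U x\<bar>) \<le> norm ((U x)\<^sup>2 + indicator {-R..R} x :: real)"
  proof (rule AE_I2)
    fix x
    have "\<bar>U x\<bar> \<le> (U x)\<^sup>2 + 1"
    proof -
      have "0 \<le> (\<bar>U x\<bar> - 1/2)\<^sup>2" by simp
      then show ?thesis by (simp add: power2_eq_square algebra_simps abs_mult_self_eq)
    qed
    then show "norm (indicator {-R..R} x * \<bar>U x\<bar>) \<le> norm ((U x)\<^sup>2 + indicator {-R..R} x :: real)"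
      by (simp add: indicator_def)
  qed
qed

lemma nice_meas: "nice G \<Longrightarrow> G \<in> borel_measurable (lborel \<Otimes>\<^sub>M lborel)"
proof -
  assume "nice G"
  then have "continuous_on UNIV G" unfolding nice_def by (elim conjE)
  then have "G \<in> borel_measurable borel" by (rule borel_measurable_continuous_onI)
  then show ?thesis by (simp add: lborel_prod)
qed


lemma prod_integrable:
  assumes U: "L2 U" and G: "nice G"
  shows "integrable (lborel \<Otimes>\<^sub>M lborel) (\<lambda>(t, x). indicator {0<..} t * (U x * G (t, x)))"
proof -
  obtain B where B: "\<And>p. \<bar>G p\<bar> \<le> B" using G unfolding nice_def by blast
  obtain a b R where abR: "0 < a" "a < b" "\<And>t x. t \<le> a \<or> b \<le> t \<or> R \<le> \<bar>x\<bar> \<Longrightarrow> G (t, x) = 0"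
    using G unfolding nice_def by blast
  have Um: "U \<in> borel_measurable lborel" using U unfolding L2_def by simp
  have Gm[measurable]: "G \<in> borel_measurable (lborel \<Otimes>\<^sub>M lborel)" by (rule nice_meas[OF G])
  define C where "C = (\<integral>x. indicator {-R..R} x * \<bar>U x\<bar> \<partial>lborel)"
  define h where "h = (\<lambda>(t, x). B * (indicator {a..b} t * (indicator {-R..R} x * \<bar>U x\<bar>)) :: real)"
  have hm: "h \<in> borel_measurable (lborel \<Otimes>\<^sub>M lborel)"
    unfolding h_def using Um by measurable
  have hint: "integrable (lborel \<Otimes>\<^sub>M lborel) h"
  proof (rule lborel_pair.Fubini_integrable[OF hm])
    have eq: "(\<integral>y. norm (h (t, y)) \<partial>lborel) = \<bar>B\<bar> * C * indicator {a..b} t" for t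
    proof -
      have "(\<lambda>y. norm (h (t, y))) = (\<lambda>y. (\<bar>B\<bar> * indicator {a..b} t) * (indicator {-R..R} y * \<bar>U y\<bar>))"
        unfolding h_def by (auto simp: abs_mult indicator_def)
      then show ?thesis unfolding C_def by simp
    qed
    show "integrable lborel (\<lambda>t. \<integral>y. norm (h (t, y)) \<partial>lborel)"
      unfolding eq by (intro integrable_mult_right integrable_real_indicator) (auto simp: emeasure_lborel_Icc_eq)
    show "AE t in lborel. integrable lborel (\<lambda>y. h (t, y))"
    proof (rule AE_I2)
      fix t
      have "(\<lambda>y. h (t, y)) = (\<lambda>y. (B * indicator {a..b} t) * (indicator {-R..R} y * \<bar>U y\<bar>))"
        unfolding h_def by auto
      then show "integrable lborel (\<lambda>y. h (t, y))"
        using L2_local[OF U, of R] by simp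
    qed
  qed
  show ?thesis
  proof (rule Bochner_Integration.integrable_bound[OF hint])
    show "(\<lambda>(t, x). indicator {0<..} t * (U x * G (t, x))) \<in> borel_measurable (lborel \<Otimes>\<^sub>M lborel)"
      using Um by measurable
    show "AE p in lborel \<Otimes>\<^sub>M lborel. norm ((\<lambda>(t, x). indicator {0<..} t * (U x * G (t, x))) p) \<le> norm (h p)"
    proof (rule AE_I2)
      fix p :: "real \<times> real"
      obtain t x where p: "p = (t, x)" by (cases p)
      show "norm ((\<lambda>(t, x). indicator {0<..} t * (U x * G (t, x))) p) \<le> norm (h p)"
      proof (cases "t \<le> a \<or> b \<le> t \<or> R \<le> \<bar>x\<bar>")
        case True
        then show ?thesis using abR(3)[OF True] p by simp
      next
        case False
        then have "t \<in> {a..b}" "x \<in> {-R..R}" "t \<in> {0<..}" using abR(1) by auto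
        then have "h p = B * \<bar>U x\<bar>" unfolding h_def p by simp
        moreover have "\<bar>U x * G (t, x)\<bar> \<le> \<bar>U x\<bar> * B"
          unfolding abs_mult by (rule mult_left_mono[OF B]) simp
        moreover have "0 \<le> B" using B[of p] by linarith
        ultimately show ?thesis using \<open>t \<in> {0<..}\<close> p by (simp add: mult.commute)
      qed
    qed
  qed
qed


lemma pair_prod:
  assumes U: "L2 U" and G: "nice G"
  shows "pair (\<lambda>t x. U x) G = integral\<^sup>L (lborel \<Otimes>\<^sub>M lborel) (\<lambda>(t, x). indicator {0<..} t * (U x * G (t, x)))"
proof -
  have "pair (\<lambda>t x. U x) G = (\<integral>t. (\<integral>x. indicator {0<..} t * (U x * G (t, x)) \<partial>lborel) \<partial>lborel)"
    unfolding pair_def set_lebesgue_integral_def by simp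
  also have "\<dots> = integral\<^sup>L (lborel \<Otimes>\<^sub>M lborel) (\<lambda>(t, x). indicator {0<..} t * (U x * G (t, x)))"
    using lborel_pair.integral_fst'[OF prod_integrable[OF U G]] by simp
  finally show ?thesis .
qed

lemma pair_swap:
  assumes U: "L2 U" and G: "nice G"
  shows "pair (\<lambda>t x. U x) G = (\<integral>x. U x * (\<integral>t. indicator {0<..} t * G (t, x) \<partial>lborel) \<partial>lborel)"
proof -
  have "pair (\<lambda>t x. U x) G = (\<integral>x. (\<integral>t. indicator {0<..} t * (U x * G (t, x)) \<partial>lborel) \<partial>lborel)"
    unfolding pair_prod[OF U G]
    using lborel_pair.integral_snd[of "\<lambda>t x. indicator {0<..} t * (U x * G (t, x))", OF prod_integrable[OF U G]]
    by simp
  also have "\<dots> = (\<integral>x. U x * (\<integral>t. indicator {0<..} t * G (t, x) \<partial>lborel) \<partial>lborel)"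
  proof -
    have "(\<lambda>t. indicator {0<..} t * (U x * G (t, x))) = (\<lambda>t. U x * (indicator {0<..} t * G (t, x)))" for x
      by (auto simp: fun_eq_iff)
    then show ?thesis by simp
  qed
  finally show ?thesis .
qed

lemma pair_lin:
  assumes U: "L2 U" and A: "nice A" and B: "nice B"
  shows "pair (\<lambda>t x. U x) (\<lambda>p. A p + k * B p) = pair (\<lambda>t x. U x) A + k * pair (\<lambda>t x. U x) B"
proof -
  have AB: "nice (\<lambda>p. A p + k * B p)" by (rule nice_lin[OF A B])
  have "(\<lambda>(t, x). indicator {0<..} t * (U x * (A (t, x) + k * B (t, x))) :: real) =
     (\<lambda>p. (\<lambda>(t, x). indicator {0<..} t * (U x * A (t, x))) p + k * (\<lambda>(t, x). indicator {0<..} t * (U x * B (t, x))) p)"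
    by (auto simp: fun_eq_iff algebra_simps)
  then show ?thesis
    unfolding pair_prod[OF U AB] pair_prod[OF U A] pair_prod[OF U B]
    using prod_integrable[OF U A] prod_integrable[OF U B] by simp
qed

lemma pair_cmult: "pair (\<lambda>t x. k * U x) G = k * pair (\<lambda>t x. U x) G"
proof -
  have "(\<lambda>t. indicator {0<..} t *\<^sub>R (\<integral>x. k * U x * G (t, x) \<partial>lborel)) =
        (\<lambda>t. k * (indicator {0<..} t *\<^sub>R (\<integral>x. U x * G (t, x) \<partial>lborel)))"
  proof
    fix t
    have "(\<lambda>x. k * U x * G (t, x)) = (\<lambda>x. k * (U x * G (t, x)))" by (auto simp: fun_eq_iff)
    then show "indicator {0<..} t *\<^sub>R (\<integral>x. k * U x * G (t, x) \<partial>lborel) = k * (indicator {0<..} t *\<^sub>R (\<integral>x. U x * G (t, x) \<partial>lborel))"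
      by simp
  qed
  then show ?thesis unfolding pair_def set_lebesgue_integral_def by simp
qed

lemma local_zero_dt:
  assumes "open S" "(t, x) \<in> S" "\<And>s. (s, x) \<in> S \<Longrightarrow> F (s, x) = 0"
  shows "pdt F (t, x) = 0"
proof -
  have o: "open ((\<lambda>s. (s, x)) -` S)" using assms(1) by (intro continuous_open_vimage continuous_intros) 
  have "\<forall>\<^sub>F s in nhds t. s \<in> (\<lambda>s. (s, x)) -` S" using assms(2) by (intro eventually_nhds_in_open[OF o]) simp
  then have ev: "\<forall>\<^sub>F s in nhds t. s \<in> UNIV \<longrightarrow> 0 = F (s, x)" by (rule eventually_mono) (use assms(3) in auto)
  have "((\<lambda>s. F (s, x)) has_real_derivative 0) (at t)"
    by (rule has_field_derivative_cong_ev[THEN iffD1, OF _ ev]) auto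
  then show ?thesis unfolding pdt_def by (simp add: DERIV_imp_deriv)
qed

lemma ftc_zero:
  assumes F: "smooth2 F" and a: "0 < a" "a < b" and z: "\<And>t x. t \<le> a \<or> b \<le> t \<Longrightarrow> F (t, x) = 0"
  shows "(\<integral>t. indicator {0<..} t * pdt F (t, x) \<partial>lborel) = 0"
proof -
  have eq: "indicator {0<..} t * pdt F (t, x) = indicator {a/2..b+1} t *\<^sub>R pdt F (t, x)" for t
  proof (cases "t \<in> {a/2..b+1}")
    case True then show ?thesis using a by (simp add: indicator_def)
  next
    case False
    show ?thesis
    proof (cases "t \<le> 0")
      case True then show ?thesis using a by (simp add: indicator_def)
    next
      case f: False
      have "t < a \<or> b < t" using False a by auto
      then have "pdt F (t, x) = 0"
      proof
        assume "t < a"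
        show ?thesis by (rule local_zero_dt[of "{..<a} \<times> UNIV"]) (use \<open>t < a\<close> z in \<open>auto intro: open_Times\<close>)
      next
        assume "b < t"
        show ?thesis by (rule local_zero_dt[of "{b<..} \<times> UNIV"]) (use \<open>b < t\<close> z in \<open>auto intro: open_Times\<close>)
      qed
      then show ?thesis by simp
    qed
  qed
  have "(\<integral>t. indicator {0<..} t * pdt F (t, x) \<partial>lborel) = (\<integral>t. indicator {a/2..b+1} t *\<^sub>R pdt F (t, x) \<partial>lborel)"
    unfolding eq ..
  also have "\<dots> = F (b + 1, x) - F (a / 2, x)"
  proof (rule integral_FTC_atLeastAtMost)
    show "a / 2 \<le> b + 1" using a by simp
    show "((\<lambda>s. F (s, x)) has_vector_derivative pdt F (s, x)) (at s within {a / 2..b + 1})" for s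
      using smooth2_dt[OF F, of x s] by (simp add: has_real_derivative_iff_has_vector_derivative has_vector_derivative_at_within)
    have "continuous_on UNIV (pdt F)" by (rule smooth2_cont[OF smooth2_pdt[OF F]])
    then show "continuous_on {a / 2..b + 1} (\<lambda>s. pdt F (s, x))"
      by (rule continuous_on_compose2[of UNIV "pdt F" _ "\<lambda>s. (s, x)"]) (auto intro: continuous_intros)
  qed
  also have "\<dots> = 0" using z a by simp
  finally show ?thesis .
qed

lemma test_fun_Sh: assumes "test_fun \<phi>" shows "test_fun (\<lambda>p. \<phi> (Sh c t0 p))"
proof -
  have cl: "closure {p. \<phi> (Sh c t0 p) \<noteq> 0} = Sh (-c) t0 ` closure {p. \<phi> p \<noteq> 0}"
    unfolding supp_Sh by (rule closure_homeo_image[OF cont_Sh cont_Sh Sh_inv(2) Sh_inv(1)])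
  have "compact (Sh (-c) t0 ` closure {p. \<phi> p \<noteq> 0})"
  proof -
    have "compact (closure {p. \<phi> p \<noteq> 0})" using assms unfolding test_fun_def by (elim conjE)
    then show ?thesis using compact_continuous_image[OF continuous_on_subset[OF cont_Sh]] by blast
  qed
  moreover have "Sh (-c) t0 ` closure {p. \<phi> p \<noteq> 0} \<subseteq> {0<..} \<times> UNIV"
  proof
    fix q assume "q \<in> Sh (-c) t0 ` closure {p. \<phi> p \<noteq> 0}"
    then obtain r where r: "r \<in> closure {p. \<phi> p \<noteq> 0}" "q = Sh (-c) t0 r" by blast
    have "closure {p. \<phi> p \<noteq> 0} \<subseteq> {0<..} \<times> UNIV" using assms unfolding test_fun_def by (elim conjE)
    then have "fst r > 0" using r(1) by (auto simp: mem_Times_iff)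
    then show "q \<in> {0<..} \<times> UNIV" using r(2) by (simp add: Sh_def mem_Times_iff)
  qed
  moreover have "smooth2 (\<lambda>p. \<phi> (Sh c t0 p))"
    using assms unfolding test_fun_def by (intro smooth2_comp) simp
  ultimately show ?thesis unfolding test_fun_def cl by (intro conjI)
qed


lemma pair_zero:
  assumes U: "L2 U" and psi: "test_fun \<psi>"
  shows "pair (\<lambda>t x. U x) (Lop (pdt \<psi>)) = 0"
proof -
  have s: "smooth2 \<psi>" using psi unfolding test_fun_def by simp
  have s2: "smooth2 (pdx (pdx \<psi>))" by (intro smooth2_pdx s)
  have L: "Lop \<psi> = (\<lambda>p. \<psi> p + (-1) * pdx (pdx \<psi>) p)" unfolding Lop_def by (simp add: fun_eq_iff)
  have sL: "smooth2 (Lop \<psi>)" unfolding L by (intro smooth2_lin s s2)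
  have "pdt (Lop \<psi>) = (\<lambda>p. pdt \<psi> p + (-1) * pdt (pdx (pdx \<psi>)) p)"
    unfolding L using iter_pd_lin[OF s s2, of "[True]" "-1"] by simp
  moreover have "pdx (pdx (pdt \<psi>)) = pdt (pdx (pdx \<psi>))"
    using clairaut[OF s] clairaut[OF smooth2_pdx[OF s]] by simp
  ultimately have eqL: "Lop (pdt \<psi>) = pdt (Lop \<psi>)" unfolding Lop_def[of "pdt \<psi>"] by (simp add: fun_eq_iff)
  have n1: "nice (Lop (pdt \<psi>))"
  proof -
    have e: "Lop (pdt \<psi>) = (\<lambda>p. iter_pd [True] \<psi> p + (-1) * iter_pd [False, False, True] \<psi> p)"
      unfolding Lop_def by (simp add: fun_eq_iff)
    show ?thesis unfolding e by (rule nice_lin[OF nice_iter[OF psi] nice_iter[OF psi]])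
  qed
  have n2: "nice (Lop \<psi>)"
  proof -
    have e: "Lop \<psi> = (\<lambda>p. iter_pd [] \<psi> p + (-1) * iter_pd [False, False] \<psi> p)"
      unfolding Lop_def by (simp add: fun_eq_iff)
    show ?thesis unfolding e by (rule nice_lin[OF nice_iter[OF psi] nice_iter[OF psi]])
  qed
  obtain a b R where abR: "0 < a" "a < b" "\<And>t x. t \<le> a \<or> b \<le> t \<or> R \<le> \<bar>x\<bar> \<Longrightarrow> Lop \<psi> (t, x) = 0"
    using n2 unfolding nice_def by blast
  have inner: "(\<integral>t. indicator {0<..} t * Lop (pdt \<psi>) (t, x) \<partial>lborel) = 0" for x
    unfolding eqL by (rule ftc_zero[OF sL abR(1,2)]) (use abR(3) in blast)
  show ?thesis unfolding pair_swap[OF U n1] inner by simp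
qed

lemma pair_shift:
  "pair (\<lambda>t x. F (x - c * (t - t0))) g = pair (\<lambda>t x. F x) (\<lambda>p. g (Sh c t0 p))"
proof -
  have "(\<integral>x. F (x - c * (t - t0)) * g (t, x) \<partial>lborel) = (\<integral>x. F x * g (Sh c t0 (t, x)) \<partial>lborel)" for t
  proof -
    define s where "s = c * (t - t0)"
    have "(\<integral>x. F (x - s) * g (t, x) \<partial>lborel) = \<bar>1\<bar> *\<^sub>R (\<integral>y. F (s + 1 * y - s) * g (t, s + 1 * y) \<partial>lborel)"
      by (rule lborel_integral_real_affine) simp
    also have "\<dots> = (\<integral>y. F y * g (t, y + s) \<partial>lborel)" by (simp add: add.commute)
    finally show ?thesis unfolding s_def Sh_def by simp
  qed
  then show ?thesis unfolding pair_def by simp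
qed

lemma Lop_pdt_shift:
  assumes s: "smooth2 \<phi>"
  shows "(\<lambda>p. Lop (pdt \<phi>) (Sh c t0 p)) =
    (\<lambda>p. Lop (pdt (\<lambda>q. \<phi> (Sh c t0 q))) p + (- c) * Lop (pdx (\<lambda>q. \<phi> (Sh c t0 q))) p)"
proof -
  define G where "G = (\<lambda>q. pdt \<phi> q + c * pdx \<phi> q)"
  have sG: "smooth2 G" unfolding G_def by (intro smooth2_lin smooth2_pdt smooth2_pdx s)
  have sx: "smooth2 (pdx \<phi>)" by (intro smooth2_pdx s)
  have sxx: "smooth2 (pdx (pdx \<phi>))" by (intro smooth2_pdx s)
  have dt: "pdt (\<lambda>q. \<phi> (Sh c t0 q)) = (\<lambda>p. G (Sh c t0 p))" unfolding G_def by (rule pdt_comp[OF s])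
  have dxxt: "pdx (pdx (pdt (\<lambda>q. \<phi> (Sh c t0 q)))) = (\<lambda>p. pdx (pdx G) (Sh c t0 p))"
    unfolding dt pdx_comp[OF sG] pdx_comp[OF smooth2_pdx[OF sG]] ..
  have G2: "pdx (pdx G) = (\<lambda>q. pdx (pdx (pdt \<phi>)) q + c * pdx (pdx (pdx \<phi>)) q)"
    unfolding G_def using iter_pd_lin[OF smooth2_pdt[OF s] sx, of "[False, False]" c] by simp
  have dx: "pdx (\<lambda>q. \<phi> (Sh c t0 q)) = (\<lambda>p. pdx \<phi> (Sh c t0 p))" by (rule pdx_comp[OF s])
  have dxxx: "pdx (pdx (pdx (\<lambda>q. \<phi> (Sh c t0 q)))) = (\<lambda>p. pdx (pdx (pdx \<phi>)) (Sh c t0 p))"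
    unfolding dx pdx_comp[OF sx] pdx_comp[OF sxx] ..
  show ?thesis
    unfolding Lop_def unfolding dxxt dxxx unfolding G2 dt dx
    by (simp add: fun_eq_iff G_def algebra_simps)
qed


lemma CH_rest_shift:
  assumes s: "smooth2 \<phi>"
  shows "CH_rest (\<lambda>t x. U (x - c * (t - t0))) (\<lambda>t x. Ux (x - c * (t - t0)))
           (\<lambda>t x. V (x - c * (t - t0))) (\<lambda>t x. Vx (x - c * (t - t0)))
           (\<lambda>t x. W (x - c * (t - t0))) (\<lambda>t x. Wx (x - c * (t - t0))) \<phi>
       = CH_rest (\<lambda>t. U) (\<lambda>t. Ux) (\<lambda>t. V) (\<lambda>t. Vx) (\<lambda>t. W) (\<lambda>t. Wx) (\<lambda>q. \<phi> (Sh c t0 q))"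
proof -
  have sx: "smooth2 (pdx \<phi>)" by (intro smooth2_pdx s)
  have sxx: "smooth2 (pdx (pdx \<phi>))" by (intro smooth2_pdx s)
  have dx: "pdx (\<lambda>q. \<phi> (Sh c t0 q)) = (\<lambda>p. pdx \<phi> (Sh c t0 p))" by (rule pdx_comp[OF s])
  have dxx: "pdx (pdx (\<lambda>q. \<phi> (Sh c t0 q))) = (\<lambda>p. pdx (pdx \<phi>) (Sh c t0 p))"
    unfolding dx pdx_comp[OF sx] ..
  have dxxx: "pdx (pdx (pdx (\<lambda>q. \<phi> (Sh c t0 q)))) = (\<lambda>p. pdx (pdx (pdx \<phi>)) (Sh c t0 p))"
    unfolding dxx pdx_comp[OF sxx] ..
  have 1: "pair (\<lambda>t x. Ux (x - c * (t - t0)) * (V (x - c * (t - t0)) + W (x - c * (t - t0)))) (pdx (pdx \<phi>))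
      = pair (\<lambda>t x. Ux x * (V x + W x)) (pdx (pdx (\<lambda>q. \<phi> (Sh c t0 q))))"
    unfolding dxx by (rule pair_shift[of "\<lambda>y. Ux y * (V y + W y)"])
  have 2: "pair (\<lambda>t x. (U (x - c * (t - t0)))\<^sup>2) (pdx (pdx (pdx \<phi>)))
      = pair (\<lambda>t x. (U x)\<^sup>2) (pdx (pdx (pdx (\<lambda>q. \<phi> (Sh c t0 q)))))"
    unfolding dxxx by (rule pair_shift[of "\<lambda>y. (U y)\<^sup>2"])
  have 3: "pair (\<lambda>t x. 3/2 * (U (x - c * (t - t0)))\<^sup>2 + 1/2 * (Ux (x - c * (t - t0)))\<^sup>2
                 + U (x - c * (t - t0)) * (V (x - c * (t - t0)) + W (x - c * (t - t0)))
                 + Ux (x - c * (t - t0)) * (Vx (x - c * (t - t0)) + Wx (x - c * (t - t0)))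
                 + 1/2 * ((V (x - c * (t - t0)))\<^sup>2 + (W (x - c * (t - t0)))\<^sup>2
                          - (Vx (x - c * (t - t0)))\<^sup>2 - (Wx (x - c * (t - t0)))\<^sup>2)) (pdx \<phi>)
     = pair (\<lambda>t x. 3/2 * (U x)\<^sup>2 + 1/2 * (Ux x)\<^sup>2 + U x * (V x + W x) + Ux x * (Vx x + Wx x)
                 + 1/2 * ((V x)\<^sup>2 + (W x)\<^sup>2 - (Vx x)\<^sup>2 - (Wx x)\<^sup>2)) (pdx (\<lambda>q. \<phi> (Sh c t0 q)))"
    unfolding dx by (rule pair_shift[of "\<lambda>x. 3/2 * (U x)\<^sup>2 + 1/2 * (Ux x)\<^sup>2 + U x * (V x + W x) + Ux x * (Vx x + Wx x)
                 + 1/2 * ((V x)\<^sup>2 + (W x)\<^sup>2 - (Vx x)\<^sup>2 - (Wx x)\<^sup>2)"])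
  show ?thesis unfolding CH_rest_def 1 2 3 ..
qed

lemma weak_eq:
  fixes U V W Ux Vx Wx :: "real \<Rightarrow> real"
  assumes U: "L2 U" and phi: "test_fun \<phi>"
    and H: "\<And>\<psi>. test_fun \<psi> \<Longrightarrow> pair (\<lambda>t x. - c * U x) (Lop (pdx \<psi>))
          + CH_rest (\<lambda>t. U) (\<lambda>t. Ux) (\<lambda>t. V) (\<lambda>t. Vx) (\<lambda>t. W) (\<lambda>t. Wx) \<psi> = 0"
  shows "pair (\<lambda>t x. U (x - c * (t - t0))) (Lop (pdt \<phi>))
    + CH_rest (\<lambda>t x. U (x - c * (t - t0))) (\<lambda>t x. Ux (x - c * (t - t0)))
           (\<lambda>t x. V (x - c * (t - t0))) (\<lambda>t x. Vx (x - c * (t - t0)))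
           (\<lambda>t x. W (x - c * (t - t0))) (\<lambda>t x. Wx (x - c * (t - t0))) \<phi> = 0"
proof -
  define \<psi> where "\<psi> = (\<lambda>q. \<phi> (Sh c t0 q))"
  have s: "smooth2 \<phi>" using phi unfolding test_fun_def by simp
  have psi: "test_fun \<psi>" unfolding \<psi>_def by (rule test_fun_Sh[OF phi])
  have n1: "nice (Lop (pdt \<psi>))"
  proof -
    have e: "Lop (pdt \<psi>) = (\<lambda>p. iter_pd [True] \<psi> p + (-1) * iter_pd [False, False, True] \<psi> p)"
      unfolding Lop_def by (simp add: fun_eq_iff)
    show ?thesis unfolding e by (rule nice_lin[OF nice_iter[OF psi] nice_iter[OF psi]])
  qed
  have n2: "nice (Lop (pdx \<psi>))"
  proof -
    have e: "Lop (pdx \<psi>) = (\<lambda>p. iter_pd [False] \<psi> p + (-1) * iter_pd [False, False, False] \<psi> p)"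
      unfolding Lop_def by (simp add: fun_eq_iff)
    show ?thesis unfolding e by (rule nice_lin[OF nice_iter[OF psi] nice_iter[OF psi]])
  qed
  have "pair (\<lambda>t x. U (x - c * (t - t0))) (Lop (pdt \<phi>)) = pair (\<lambda>t x. U x) (\<lambda>p. Lop (pdt \<phi>) (Sh c t0 p))"
    by (rule pair_shift)
  also have "\<dots> = pair (\<lambda>t x. U x) (\<lambda>p. Lop (pdt \<psi>) p + (- c) * Lop (pdx \<psi>) p)"
    unfolding Lop_pdt_shift[OF s] \<psi>_def ..
  also have "\<dots> = pair (\<lambda>t x. U x) (Lop (pdt \<psi>)) + (- c) * pair (\<lambda>t x. U x) (Lop (pdx \<psi>))"
    by (rule pair_lin[OF U n1 n2])
  also have "\<dots> = pair (\<lambda>t x. - c * U x) (Lop (pdx \<psi>))"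
    unfolding pair_zero[OF U psi] pair_cmult[of "- c"] by simp
  finally show ?thesis unfolding CH_rest_shift[OF s] \<psi>_def[symmetric] using H[OF psi] by simp
qed

lemma int_shift: "(\<integral>x. g (x + h) \<partial>lborel) = (\<integral>x. g x \<partial>lborel)" for g :: "real \<Rightarrow> real"
  using lborel_integral_real_affine[of 1 g h] by (simp add: add.commute)

lemma integrable_shift: "integrable lborel g \<Longrightarrow> integrable lborel (\<lambda>x. g (x + h))" for g :: "real \<Rightarrow> real"
  using lborel_integrable_real_affine[of g 1 h] by (simp add: add.commute)

definition tcont :: "(real \<Rightarrow> real) \<Rightarrow> bool" where
  "tcont f \<longleftrightarrow> (\<forall>e>0. \<exists>d>0. \<forall>h. \<bar>h\<bar> < d \<longrightarrow> (\<integral>x. \<bar>f (x + h) - f x\<bar> \<partial>lborel) < e)"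

lemma tcont_add:
  assumes f: "integrable lborel f" and g: "integrable lborel g" and tf: "tcont f" and tg: "tcont g"
  shows "tcont (\<lambda>x. f x + g x)"
  unfolding tcont_def
proof (intro allI impI)
  fix e :: real assume e: "e > 0"
  obtain d1 where d1: "d1 > 0" "\<And>h. \<bar>h\<bar> < d1 \<Longrightarrow> (\<integral>x. \<bar>f (x + h) - f x\<bar> \<partial>lborel) < e/2"
    using tf e unfolding tcont_def by (meson half_gt_zero)
  obtain d2 where d2: "d2 > 0" "\<And>h. \<bar>h\<bar> < d2 \<Longrightarrow> (\<integral>x. \<bar>g (x + h) - g x\<bar> \<partial>lborel) < e/2"
    using tg e unfolding tcont_def by (meson half_gt_zero)
  show "\<exists>d>0. \<forall>h. \<bar>h\<bar> < d \<longrightarrow> (\<integral>x. \<bar>f (x + h) + g (x + h) - (f x + g x)\<bar> \<partial>lborel) < e"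
  proof (intro exI[of _ "min d1 d2"] conjI allI impI)
    show "min d1 d2 > 0" using d1 d2 by simp
    fix h :: real assume h: "\<bar>h\<bar> < min d1 d2"
    have i1: "integrable lborel (\<lambda>x. \<bar>f (x + h) - f x\<bar>)"
      by (intro integrable_abs Bochner_Integration.integrable_diff integrable_shift f)
    have i2: "integrable lborel (\<lambda>x. \<bar>g (x + h) - g x\<bar>)"
      by (intro integrable_abs Bochner_Integration.integrable_diff integrable_shift g)
    have "(\<integral>x. \<bar>f (x + h) + g (x + h) - (f x + g x)\<bar> \<partial>lborel)
        \<le> (\<integral>x. \<bar>f (x + h) - f x\<bar> + \<bar>g (x + h) - g x\<bar> \<partial>lborel)"
      by (rule integral_mono) (auto intro!: Bochner_Integration.integrable_add integrable_abs Bochner_Integration.integrable_diff integrable_shift f g i1 i2)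
    also have "\<dots> = (\<integral>x. \<bar>f (x + h) - f x\<bar> \<partial>lborel) + (\<integral>x. \<bar>g (x + h) - g x\<bar> \<partial>lborel)"
      by (rule Bochner_Integration.integral_add[OF i1 i2])
    also have "\<dots> < e/2 + e/2" using d1(2)[of h] d2(2)[of h] h by (intro add_strict_mono) auto
    finally show "(\<integral>x. \<bar>f (x + h) + g (x + h) - (f x + g x)\<bar> \<partial>lborel) < e" by simp
  qed
qed


lemma tcont_lim:
  fixes f :: "real \<Rightarrow> real" and s :: "nat \<Rightarrow> real \<Rightarrow> real"
  assumes f: "integrable lborel f" and si: "\<And>i. integrable lborel (s i)" and ts: "\<And>i. tcont (s i)"
    and lim: "\<And>x. (\<lambda>i. s i x) \<longlonglongrightarrow> f x" and bd: "\<And>i x. \<bar>s i x\<bar> \<le> 2 * \<bar>f x\<bar>"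
  shows "tcont f"
  unfolding tcont_def
proof (intro allI impI)
  fix e :: real assume e: "e > 0"
  have conv: "(\<lambda>i. \<integral>x. \<bar>s i x - f x\<bar> \<partial>lborel) \<longlonglongrightarrow> (\<integral>x. 0 \<partial>(lborel::real measure))"
  proof (rule integral_dominated_convergence[where s="\<lambda>i x. \<bar>s i x - f x\<bar>" and f="\<lambda>x. 0" and w="\<lambda>x. 3 * \<bar>f x\<bar>" and M=lborel])
    show "(\<lambda>x. 0::real) \<in> borel_measurable lborel" by simp
    show "(\<lambda>x. \<bar>s i x - f x\<bar>) \<in> borel_measurable lborel" for i
      using si[of i] f by (intro borel_measurable_abs borel_measurable_diff borel_measurable_integrable)
    show "integrable lborel (\<lambda>x. 3 * \<bar>f x\<bar>)" using f by (intro integrable_mult_right integrable_abs)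
    show "AE x in lborel. (\<lambda>i. \<bar>s i x - f x\<bar>) \<longlonglongrightarrow> 0"
    proof (rule AE_I2)
      fix x
      have "(\<lambda>i. \<bar>s i x - f x\<bar>) \<longlonglongrightarrow> \<bar>f x - f x\<bar>"
        by (intro tendsto_intros lim)
      then show "(\<lambda>i. \<bar>s i x - f x\<bar>) \<longlonglongrightarrow> 0" by simp
    qed
    show "AE x in lborel. norm \<bar>s i x - f x\<bar> \<le> 3 * \<bar>f x\<bar>" for i
    proof (rule AE_I2)
      fix x show "norm \<bar>s i x - f x\<bar> \<le> 3 * \<bar>f x\<bar>" using bd[of i x] by simp
    qed
  qed
  then have "\<forall>\<^sub>F i in sequentially. (\<integral>x. \<bar>s i x - f x\<bar> \<partial>lborel) < e/3"
    using e by (intro order_tendstoD(2)) auto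
  then obtain N where N: "\<forall>n\<ge>N. (\<integral>x. \<bar>s n x - f x\<bar> \<partial>lborel) < e/3"
    unfolding eventually_sequentially by blast
  define i where "i = N"
  have i: "(\<integral>x. \<bar>s i x - f x\<bar> \<partial>lborel) < e/3" using N unfolding i_def by simp
  have e3: "e/3 > 0" using e by simp
  from ts[of i, unfolded tcont_def, rule_format, OF e3]
  obtain d where d: "d > 0" "\<And>h. \<bar>h\<bar> < d \<Longrightarrow> (\<integral>x. \<bar>s i (x + h) - s i x\<bar> \<partial>lborel) < e/3"
    by blast
  show "\<exists>d>0. \<forall>h. \<bar>h\<bar> < d \<longrightarrow> (\<integral>x. \<bar>f (x + h) - f x\<bar> \<partial>lborel) < e"
  proof (intro exI[of _ d] conjI allI impI)
    show "d > 0" by fact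
    fix h :: real assume h: "\<bar>h\<bar> < d"
    have iA: "integrable lborel (\<lambda>x. \<bar>s i x - f x\<bar>)"
      by (intro integrable_abs Bochner_Integration.integrable_diff si f)
    have iA': "integrable lborel (\<lambda>x. \<bar>s i (x + h) - f (x + h)\<bar>)"
      using integrable_shift[OF iA, of h] by simp
    have iB: "integrable lborel (\<lambda>x. \<bar>s i (x + h) - s i x\<bar>)"
      by (intro integrable_abs Bochner_Integration.integrable_diff integrable_shift si)
    have iC: "integrable lborel (\<lambda>x. \<bar>f (x + h) - f x\<bar>)"
      by (intro integrable_abs Bochner_Integration.integrable_diff integrable_shift f)
    have "(\<integral>x. \<bar>f (x + h) - f x\<bar> \<partial>lborel)
        \<le> (\<integral>x. \<bar>s i (x + h) - f (x + h)\<bar> + \<bar>s i (x + h) - s i x\<bar> + \<bar>s i x - f x\<bar> \<partial>lborel)"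
      by (rule integral_mono[OF iC]) (auto intro!: Bochner_Integration.integrable_add iA iA' iB)
    also have "\<dots> = (\<integral>x. \<bar>s i (x + h) - f (x + h)\<bar> \<partial>lborel) + (\<integral>x. \<bar>s i (x + h) - s i x\<bar> \<partial>lborel)
        + (\<integral>x. \<bar>s i x - f x\<bar> \<partial>lborel)"
      using iA iA' iB by simp
    also have "(\<integral>x. \<bar>s i (x + h) - f (x + h)\<bar> \<partial>lborel) = (\<integral>x. \<bar>s i x - f x\<bar> \<partial>lborel)"
      by (rule int_shift[of "\<lambda>x. \<bar>s i x - f x\<bar>"])
    also have "(\<integral>x. \<bar>s i x - f x\<bar> \<partial>lborel) + (\<integral>x. \<bar>s i (x + h) - s i x\<bar> \<partial>lborel)
        + (\<integral>x. \<bar>s i x - f x\<bar> \<partial>lborel) < e/3 + e/3 + e/3"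
      using i d(2)[OF h] by linarith
    finally show "(\<integral>x. \<bar>f (x + h) - f x\<bar> \<partial>lborel) < e" by simp
  qed
qed

lemma tcont_bounded_set:
  assumes Bb: "B \<in> sets borel" and BN: "B \<subseteq> {-N..N}"
  shows "tcont (indicator B :: real \<Rightarrow> real)"
  unfolding tcont_def
proof (intro allI impI)
  fix e :: real assume e: "e > 0"
  define e' where "e' = e / 4"
  have e': "e' > 0" using e unfolding e'_def by simp
  have Bl: "B \<in> sets lebesgue" using Bb by simp
  obtain F where F: "closed F" "F \<subseteq> B" "B - F \<in> lmeasurable" "emeasure lebesgue (B - F) < ennreal e'"
    using sets_lebesgue_inner_closed[OF Bl e'] by blast
  obtain G where G: "open G" "B \<subseteq> G" "G - B \<in> lmeasurable" "emeasure lebesgue (G - B) < ennreal e'"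
    using sets_lebesgue_outer_open[OF Bl e'] by blast
  have cF: "compact F"
  proof -
    have "bounded {-N..N}" by simp
    then have "bounded F" using F(2) BN by (meson bounded_subset order_trans)
    then show ?thesis using F(1) by (simp add: compact_eq_bounded_closed)
  qed
  define D where "D = G - F"
  have Db: "D \<in> sets borel" unfolding D_def using G(1) F(1) by (intro sets.Diff borel_open borel_closed)
  have m1: "measure lebesgue (G - B) < e'"
    using G(4) e' unfolding emeasure_eq_measure2[OF G(3)] by (simp add: ennreal_less_iff)
  have m2: "measure lebesgue (B - F) < e'"
    using F(4) e' unfolding emeasure_eq_measure2[OF F(3)] by (simp add: ennreal_less_iff)
  have Usub: "D \<subseteq> (G - B) \<union> (B - F)" using F(2) G(2) unfolding D_def by auto
  have Uf: "(G - B) \<union> (B - F) \<in> fmeasurable lebesgue" using F(3) G(3) by (rule fmeasurable.Un[rotated])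
  have DL: "D \<in> sets lebesgue" using Db by simp
  have "measure lebesgue D \<le> measure lebesgue ((G - B) \<union> (B - F))"
    by (rule measure_mono_fmeasurable[OF Usub DL Uf])
  also have "\<dots> \<le> measure lebesgue (G - B) + measure lebesgue (B - F)"
    using F(3) G(3) by (intro measure_Un_le fmeasurableD)
  finally have mDL: "measure lebesgue D < 2 * e'" using m1 m2 by linarith
  have mD: "measure lborel D < 2 * e'" using mDL Db by simp
  have "D \<in> fmeasurable lebesgue" by (rule fmeasurableI2[OF Uf Usub DL])
  then have Dfin: "emeasure lborel D < \<infinity>" using Db by (simp add: fmeasurable_def)
  define d where "d = (if F = {} \<or> - G = {} then 1 else setdist F (- G))"
  have d: "d > 0"
  proof (cases "F = {} \<or> - G = {}")
    case True then show ?thesis unfolding d_def by simp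
  next
    case False
    have "F \<inter> - G = {}" using F(2) G(2) by blast
    then show ?thesis using False cF G(1) unfolding d_def
      by (simp add: setdist_gt_0_compact_closed closed_Compl)
  qed
  have inG: "x + h \<in> G" if "x \<in> F" "\<bar>h\<bar> < d" for x h
  proof (rule ccontr)
    assume nG: "x + h \<notin> G"
    then have ne: "\<not> (F = {} \<or> - G = {})" using that(1) by auto
    have "setdist F (- G) \<le> dist x (x + h)" using that(1) nG by (intro setdist_le_dist) auto
    then have "d \<le> \<bar>h\<bar>" using ne unfolding d_def by (simp add: dist_real_def)
    then show False using that(2) by simp
  qed
  have Bint: "integrable lborel (indicator B :: real \<Rightarrow> real)"
  proof (rule integrable_real_indicator)
    show "B \<in> sets lborel" using Bb by simp
    have "emeasure lborel B \<le> emeasure lborel {-N..N}" using BN by (intro emeasure_mono) auto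
    then show "emeasure lborel B < \<infinity>" by (simp add: emeasure_lborel_Icc_eq le_less_trans)
  qed
  have Dint: "integrable lborel (indicator D :: real \<Rightarrow> real)"
    using Db Dfin by (intro integrable_real_indicator) auto
  show "\<exists>d>0. \<forall>h. \<bar>h\<bar> < d \<longrightarrow> (\<integral>x. \<bar>indicator B (x + h) - indicator B x\<bar> \<partial>lborel) < e"
  proof (intro exI[of _ d] conjI allI impI d)
    fix h :: real assume h: "\<bar>h\<bar> < d"
    have pw: "\<bar>indicator B (x + h) - indicator B x\<bar> \<le> indicator D (x + h) + (indicator D x :: real)" for x
    proof (cases "x + h \<in> B \<longleftrightarrow> x \<in> B")
      case True then show ?thesis by (simp add: indicator_def)
    next
      case False
      then consider "x + h \<in> B" "x \<notin> B" | "x \<in> B" "x + h \<notin> B" by blast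
      then show ?thesis
      proof cases
        case 1
        show ?thesis
        proof (cases "x + h \<in> F")
          case True
          have "\<bar>- h\<bar> < d" using h by simp
          from inG[OF True this] have "(x + h) + (- h) \<in> G" .
          then have "x \<in> D" using 1 F(2) unfolding D_def by auto
          then show ?thesis by (simp add: indicator_def)
        next
          case False
          then have "x + h \<in> D" using 1 G(2) unfolding D_def by auto
          then show ?thesis by (simp add: indicator_def)
        qed
      next
        case 2
        show ?thesis
        proof (cases "x \<in> F")
          case True
          have "x + h \<in> G" using inG[OF True h] .
          then have "x + h \<in> D" using 2 F(2) unfolding D_def by auto
          then show ?thesis by (simp add: indicator_def)
        next
          case False
          then have "x \<in> D" using 2 G(2) unfolding D_def by auto
          then show ?thesis by (simp add: indicator_def)
        qed
      qed
    qed
    have "(\<integral>x. \<bar>indicator B (x + h) - indicator B x\<bar> \<partial>lborel) \<le> (\<integral>x. indicator D (x + h) + (indicator D x :: real) \<partial>lborel)"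
      by (rule integral_mono[OF _ _ pw]) 
         (auto intro!: integrable_abs Bochner_Integration.integrable_diff Bochner_Integration.integrable_add
            integrable_shift Bint Dint)
    also have "\<dots> = (\<integral>x. indicator D (x + h) \<partial>lborel) + (\<integral>x. (indicator D x :: real) \<partial>lborel)"
      by (rule Bochner_Integration.integral_add[OF integrable_shift[OF Dint] Dint])
    also have "\<dots> = 2 * measure lborel D"
      using int_shift[of "indicator D" h] by simp
    also have "\<dots> < 2 * (2 * e')" using mD by simp
    also have "\<dots> = e" unfolding e'_def by simp
    finally show "(\<integral>x. \<bar>indicator B (x + h) - indicator B x\<bar> \<partial>lborel) < e" .
  qed
qed


lemma tcont_set:
  assumes A: "A \<in> sets lborel" and fin: "emeasure lborel A < \<infinity>"
  shows "tcont (indicator A :: real \<Rightarrow> real)"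
proof (rule tcont_lim[where s="\<lambda>n. indicator (A \<inter> {- real n..real n})"])
  show "integrable lborel (indicator A :: real \<Rightarrow> real)" using A fin by (rule integrable_real_indicator)
  show "integrable lborel (indicator (A \<inter> {- real n..real n}) :: real \<Rightarrow> real)" for n
  proof (rule integrable_real_indicator)
    show "A \<inter> {- real n..real n} \<in> sets lborel" using A by simp
    have "emeasure lborel (A \<inter> {- real n..real n}) \<le> emeasure lborel A" using A by (intro emeasure_mono) auto
    then show "emeasure lborel (A \<inter> {- real n..real n}) < \<infinity>" using fin by (rule le_less_trans)
  qed
  show "tcont (indicator (A \<inter> {- real n..real n}) :: real \<Rightarrow> real)" for n
    by (rule tcont_bounded_set[where N="real n"]) (use A in auto)
  show "(\<lambda>n. indicator (A \<inter> {- real n..real n}) x) \<longlonglongrightarrow> (indicator A x :: real)" for x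
  proof (rule tendsto_eventually)
    obtain N :: nat where N: "\<bar>x\<bar> \<le> real N" using real_arch_simple by blast
    show "\<forall>\<^sub>F n in sequentially. indicator (A \<inter> {- real n..real n}) x = (indicator A x :: real)"
      unfolding eventually_sequentially
    proof (intro exI[of _ N] allI impI)
      fix n assume "N \<le> n"
      then have "real N \<le> real n" by simp
      then have "x \<in> {- real n..real n}" using N by auto
      then show "indicator (A \<inter> {- real n..real n}) x = (indicator A x :: real)" by (simp add: indicator_def)
    qed
  qed
  show "\<bar>indicator (A \<inter> {- real n..real n}) x\<bar> \<le> 2 * \<bar>indicator A x :: real\<bar>" for n x
    by (simp add: indicator_def)
qed

lemma tcont_cmult: "tcont f \<Longrightarrow> tcont (\<lambda>x. f x * c)"
  unfolding tcont_def
proof (intro allI impI)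
  fix e :: real assume tf: "\<forall>e>0. \<exists>d>0. \<forall>h. \<bar>h\<bar> < d \<longrightarrow> (\<integral>x. \<bar>f (x + h) - f x\<bar> \<partial>lborel) < e" and e: "e > 0"
  have e': "e / (\<bar>c\<bar> + 1) > 0" using e by simp
  from tf[rule_format, OF e'] obtain d where d: "d > 0" "\<And>h. \<bar>h\<bar> < d \<Longrightarrow> (\<integral>x. \<bar>f (x + h) - f x\<bar> \<partial>lborel) < e / (\<bar>c\<bar> + 1)"
    by blast
  show "\<exists>d>0. \<forall>h. \<bar>h\<bar> < d \<longrightarrow> (\<integral>x. \<bar>f (x + h) * c - f x * c\<bar> \<partial>lborel) < e"
  proof (intro exI[of _ d] conjI allI impI d(1))
    fix h :: real assume h: "\<bar>h\<bar> < d"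
    have "(\<lambda>x. \<bar>f (x + h) * c - f x * c\<bar>) = (\<lambda>x. \<bar>c\<bar> * \<bar>f (x + h) - f x\<bar>)"
    proof (rule ext)
      fix x
      have "f (x + h) * c - f x * c = c * (f (x + h) - f x)" by (simp add: algebra_simps)
      then show "\<bar>f (x + h) * c - f x * c\<bar> = \<bar>c\<bar> * \<bar>f (x + h) - f x\<bar>" by (simp add: abs_mult)
    qed
    then have "(\<integral>x. \<bar>f (x + h) * c - f x * c\<bar> \<partial>lborel) = \<bar>c\<bar> * (\<integral>x. \<bar>f (x + h) - f x\<bar> \<partial>lborel)"
      by simp
    also have "\<dots> \<le> \<bar>c\<bar> * (e / (\<bar>c\<bar> + 1))" using d(2)[OF h] by (intro mult_left_mono) auto
    also have "\<dots> < e"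
    proof -
      have "\<bar>c\<bar> * (e / (\<bar>c\<bar> + 1)) = e * (\<bar>c\<bar> / (\<bar>c\<bar> + 1))" by simp
      also have "\<dots> < e * 1" using e by (intro mult_strict_left_mono) auto
      finally show ?thesis by simp
    qed
    finally show "(\<integral>x. \<bar>f (x + h) * c - f x * c\<bar> \<partial>lborel) < e" .
  qed
qed

lemma tcont_integrable:
  fixes f :: "real \<Rightarrow> real"
  assumes "integrable lborel f"
  shows "tcont f"
  using assms
proof (induction rule: integrable_induct)
  case (base A c)
  have "tcont (\<lambda>x. indicator A x * c)" by (rule tcont_cmult[OF tcont_set[OF base]])
  then show ?case by simp
next
  case (add f g)
  then show ?case by (intro tcont_add) auto
next
  case (lim f s)
  show ?case
  proof (rule tcont_lim[where s=s])
    show "integrable lborel f" by fact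
    show "integrable lborel (s i)" for i by (rule lim(1))
    show "tcont (s i)" for i using lim by blast
    show "(\<lambda>i. s i x) \<longlonglongrightarrow> f x" for x using lim by simp
    show "\<bar>s i x\<bar> \<le> 2 * \<bar>f x\<bar>" for i x using lim by simp
  qed
qed

lemma sq3: "(a + b + c)\<^sup>2 \<le> 3 * (a\<^sup>2 + b\<^sup>2 + c\<^sup>2)" for a b c :: real
proof -
  have 1: "(a+b+c)\<^sup>2 = a\<^sup>2+b\<^sup>2+c\<^sup>2+2*a*b+2*b*c+2*a*c" by (simp add: power2_eq_square algebra_simps)
  have 2: "(a-b)\<^sup>2+(b-c)\<^sup>2+(a-c)\<^sup>2 = 2*a\<^sup>2+2*b\<^sup>2+2*c\<^sup>2-2*a*b-2*b*c-2*a*c" by (simp add: power2_eq_square algebra_simps)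
  have 3: "3 * (a\<^sup>2 + b\<^sup>2 + c\<^sup>2) - (a + b + c)\<^sup>2 = (a-b)\<^sup>2+(b-c)\<^sup>2+(a-c)\<^sup>2"
    by (simp add: power2_eq_square algebra_simps)
  have "0 \<le> (a-b)\<^sup>2+(b-c)\<^sup>2+(a-c)\<^sup>2" by simp
  then show ?thesis using 3 by linarith
qed

definition trunc :: "nat \<Rightarrow> (real \<Rightarrow> real) \<Rightarrow> real \<Rightarrow> real" where
  "trunc N f x = indicator {- real N..real N} x * max (- real N) (min (real N) (f x))"

lemma trunc_bound: "\<bar>trunc N f x\<bar> \<le> real N" "\<bar>trunc N f x\<bar> \<le> \<bar>f x\<bar>" "\<bar>f x - trunc N f x\<bar> \<le> \<bar>f x\<bar>"
  unfolding trunc_def by (auto simp: indicator_def)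

lemma trunc_meas: assumes fm: "f \<in> borel_measurable lborel" shows "trunc N f \<in> borel_measurable lborel"
proof -
  have [measurable]: "f \<in> borel_measurable borel" using fm by (simp add: measurable_lborel1)
  show ?thesis unfolding trunc_def[abs_def] by measurable
qed

lemma trunc_int: assumes "f \<in> borel_measurable lborel" shows "integrable lborel (trunc N f)"
proof (rule Bochner_Integration.integrable_bound)
  show "integrable lborel (\<lambda>x. real N * indicator {- real N..real N} x :: real)"
    by (intro integrable_mult_right integrable_real_indicator) (auto simp: emeasure_lborel_Icc_eq)
  show "trunc N f \<in> borel_measurable lborel" by (rule trunc_meas[OF assms])
  show "AE x in lborel. norm (trunc N f x) \<le> norm (real N * indicator {- real N..real N} x :: real)"
    by (rule AE_I2) (auto simp: trunc_def indicator_def)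
qed

lemma trunc_conv:
  assumes f: "L2 f"
  shows "(\<lambda>N. \<integral>x. (f x - trunc N f x)\<^sup>2 \<partial>lborel) \<longlonglongrightarrow> (\<integral>x. 0 \<partial>(lborel::real measure))"
proof (rule integral_dominated_convergence[where s="\<lambda>N x. (f x - trunc N f x)\<^sup>2" and f="\<lambda>x. 0" and w="\<lambda>x. (f x)\<^sup>2" and M=lborel])
  have fm: "f \<in> borel_measurable lborel" and fi: "integrable lborel (\<lambda>x. (f x)\<^sup>2)" using f unfolding L2_def by auto
  show "(\<lambda>x. 0::real) \<in> borel_measurable lborel" by simp
  show "(\<lambda>x. (f x - trunc N f x)\<^sup>2) \<in> borel_measurable lborel" for N
    using fm trunc_meas[OF fm, of N] by measurable
  show "integrable lborel (\<lambda>x. (f x)\<^sup>2)" by (rule fi)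
  show "AE x in lborel. (\<lambda>N. (f x - trunc N f x)\<^sup>2) \<longlonglongrightarrow> 0"
  proof (rule AE_I2)
    fix x
    obtain N0 :: nat where N0: "max \<bar>x\<bar> \<bar>f x\<bar> \<le> real N0" using real_arch_simple by blast
    show "(\<lambda>N. (f x - trunc N f x)\<^sup>2) \<longlonglongrightarrow> 0"
    proof (rule tendsto_eventually)
      show "\<forall>\<^sub>F N in sequentially. (f x - trunc N f x)\<^sup>2 = 0"
        unfolding eventually_sequentially
      proof (intro exI[of _ N0] allI impI)
        fix N assume "N0 \<le> N"
        then have "real N0 \<le> real N" by simp
        then have "\<bar>x\<bar> \<le> real N" "\<bar>f x\<bar> \<le> real N" using N0 by auto
        then show "(f x - trunc N f x)\<^sup>2 = 0" unfolding trunc_def by (auto simp: indicator_def abs_le_iff)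
      qed
    qed
  qed
  show "AE x in lborel. norm ((f x - trunc N f x)\<^sup>2) \<le> (f x)\<^sup>2" for N
  proof (rule AE_I2)
    fix x
    have "\<bar>f x - trunc N f x\<bar> \<le> \<bar>f x\<bar>" by (rule trunc_bound(3))
    then have "\<bar>f x - trunc N f x\<bar>\<^sup>2 \<le> \<bar>f x\<bar>\<^sup>2" by (intro power_mono) auto
    then show "norm ((f x - trunc N f x)\<^sup>2) \<le> (f x)\<^sup>2" by simp
  qed
qed


lemma L2_tcont:
  assumes f: "L2 f" and e: "e > 0"
  shows "\<exists>d>0. \<forall>h. \<bar>h\<bar> < d \<longrightarrow> (\<integral>x. (f (x + h) - f x)\<^sup>2 \<partial>lborel) < e"
proof -
  have fm: "f \<in> borel_measurable lborel" and fi: "integrable lborel (\<lambda>x. (f x)\<^sup>2)" using f unfolding L2_def by auto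
  have fb[measurable]: "f \<in> borel_measurable borel" using fm by (simp add: measurable_lborel1)
  have "\<forall>\<^sub>F N in sequentially. (\<integral>x. (f x - trunc N f x)\<^sup>2 \<partial>lborel) < e/9"
    using trunc_conv[OF f] e by (intro order_tendstoD(2)) auto
  then obtain N0 where N0: "\<forall>n\<ge>N0. (\<integral>x. (f x - trunc n f x)\<^sup>2 \<partial>lborel) < e/9"
    unfolding eventually_sequentially by blast
  define g where "g = trunc N0 f"
  define M where "M = real N0"
  have gC: "(\<integral>x. (f x - g x)\<^sup>2 \<partial>lborel) < e/9" using N0 unfolding g_def by simp
  have gm: "g \<in> borel_measurable lborel" unfolding g_def by (rule trunc_meas[OF fm])
  have gb[measurable]: "g \<in> borel_measurable borel" using gm by (simp add: measurable_lborel1)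
  have gi: "integrable lborel g" unfolding g_def by (rule trunc_int[OF fm])
  have gM: "\<bar>g x\<bar> \<le> M" for x unfolding g_def M_def by (rule trunc_bound(1))
  have M0: "M \<ge> 0" unfolding M_def by simp
  have tg: "tcont g" by (rule tcont_integrable[OF gi])
  define e2 where "e2 = e / (9 * (2 * M + 1))"
  have e2: "e2 > 0" unfolding e2_def using e M0 by simp
  from tg[unfolded tcont_def, rule_format, OF e2]
  obtain d where d: "d > 0" "\<And>h. \<bar>h\<bar> < d \<Longrightarrow> (\<integral>x. \<bar>g (x + h) - g x\<bar> \<partial>lborel) < e2" by blast
  have Ci: "integrable lborel (\<lambda>x. (f x - g x)\<^sup>2)"
  proof (rule Bochner_Integration.integrable_bound[OF fi])
    show "(\<lambda>x. (f x - g x)\<^sup>2) \<in> borel_measurable lborel" by measurable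
    show "AE x in lborel. norm ((f x - g x)\<^sup>2) \<le> norm ((f x)\<^sup>2)"
    proof (rule AE_I2)
      fix x
      have "\<bar>f x - g x\<bar> \<le> \<bar>f x\<bar>" unfolding g_def by (rule trunc_bound(3))
      then have "\<bar>f x - g x\<bar>\<^sup>2 \<le> \<bar>f x\<bar>\<^sup>2" by (intro power_mono) auto
      then show "norm ((f x - g x)\<^sup>2) \<le> norm ((f x)\<^sup>2)" by simp
    qed
  qed
  show ?thesis
  proof (intro exI[of _ d] conjI allI impI d(1))
    fix h :: real assume h: "\<bar>h\<bar> < d"
    have Di: "integrable lborel (\<lambda>x. \<bar>g (x + h) - g x\<bar>)"
      by (intro integrable_abs Bochner_Integration.integrable_diff integrable_shift gi)
    have Bi: "integrable lborel (\<lambda>x. (g (x + h) - g x)\<^sup>2)"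
    proof (rule Bochner_Integration.integrable_bound[OF integrable_mult_right[OF Di, of "2 * M"]])
      show "(\<lambda>x. (g (x + h) - g x)\<^sup>2) \<in> borel_measurable lborel" by measurable
      show "AE x in lborel. norm ((g (x + h) - g x)\<^sup>2) \<le> norm (2 * M * \<bar>g (x + h) - g x\<bar>)"
      proof (rule AE_I2)
        fix x
        have u: "\<bar>g (x + h) - g x\<bar> \<le> 2 * M" using gM[of "x + h"] gM[of x] by linarith
        have "(g (x + h) - g x)\<^sup>2 = \<bar>g (x + h) - g x\<bar> * \<bar>g (x + h) - g x\<bar>" by (simp add: power2_eq_square)
        also have "\<dots> \<le> 2 * M * \<bar>g (x + h) - g x\<bar>" using u by (intro mult_right_mono) auto
        finally show "norm ((g (x + h) - g x)\<^sup>2) \<le> norm (2 * M * \<bar>g (x + h) - g x\<bar>)" using M0 by simp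
      qed
    qed
    have Bint: "(\<integral>x. (g (x + h) - g x)\<^sup>2 \<partial>lborel) \<le> 2 * M * (\<integral>x. \<bar>g (x + h) - g x\<bar> \<partial>lborel)"
    proof -
      have "(\<integral>x. (g (x + h) - g x)\<^sup>2 \<partial>lborel) \<le> (\<integral>x. 2 * M * \<bar>g (x + h) - g x\<bar> \<partial>lborel)"
      proof (rule integral_mono[OF Bi integrable_mult_right[OF Di]])
        fix x
        have u: "\<bar>g (x + h) - g x\<bar> \<le> 2 * M" using gM[of "x + h"] gM[of x] by linarith
        have "(g (x + h) - g x)\<^sup>2 = \<bar>g (x + h) - g x\<bar> * \<bar>g (x + h) - g x\<bar>" by (simp add: power2_eq_square)
        also have "\<dots> \<le> 2 * M * \<bar>g (x + h) - g x\<bar>" using u by (intro mult_right_mono) auto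
        finally show "(g (x + h) - g x)\<^sup>2 \<le> 2 * M * \<bar>g (x + h) - g x\<bar>" .
      qed
      then show ?thesis by simp
    qed
    have Bsmall: "(\<integral>x. (g (x + h) - g x)\<^sup>2 \<partial>lborel) < e / 9"
    proof -
      have "2 * M * (\<integral>x. \<bar>g (x + h) - g x\<bar> \<partial>lborel) \<le> 2 * M * e2"
        using d(2)[OF h] M0 by (intro mult_left_mono) auto
      also have "2 * M * e2 < e / 9"
      proof -
        have "2 * M * e2 = (e / 9) * (2 * M / (2 * M + 1))" unfolding e2_def using M0 by (simp add: field_simps)
        also have "\<dots> < (e / 9) * 1" using e M0 by (intro mult_strict_left_mono) auto
        finally show ?thesis by simp
      qed
      finally show ?thesis using Bint by linarith
    qed
    have Ai: "integrable lborel (\<lambda>x. (f (x + h) - g (x + h))\<^sup>2)"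
      using integrable_shift[OF Ci, of h] by simp
    have Aeq: "(\<integral>x. (f (x + h) - g (x + h))\<^sup>2 \<partial>lborel) = (\<integral>x. (f x - g x)\<^sup>2 \<partial>lborel)"
      by (rule int_shift[of "\<lambda>x. (f x - g x)\<^sup>2"])
    have Ci': "integrable lborel (\<lambda>x. (g x - f x)\<^sup>2)" using Ci by (simp add: power2_commute)
    have Ceq: "(\<integral>x. (g x - f x)\<^sup>2 \<partial>lborel) = (\<integral>x. (f x - g x)\<^sup>2 \<partial>lborel)" by (simp add: power2_commute)
    have Si: "integrable lborel (\<lambda>x. 3 * ((f (x + h) - g (x + h))\<^sup>2 + (g (x + h) - g x)\<^sup>2 + (g x - f x)\<^sup>2))"
      by (intro integrable_mult_right Bochner_Integration.integrable_add Ai Bi Ci')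
    have pw: "(f (x + h) - f x)\<^sup>2 \<le> 3 * ((f (x + h) - g (x + h))\<^sup>2 + (g (x + h) - g x)\<^sup>2 + (g x - f x)\<^sup>2)" for x
      using sq3[of "f (x + h) - g (x + h)" "g (x + h) - g x" "g x - f x"] by simp
    have Li: "integrable lborel (\<lambda>x. (f (x + h) - f x)\<^sup>2)"
    proof (rule Bochner_Integration.integrable_bound[OF Si])
      show "(\<lambda>x. (f (x + h) - f x)\<^sup>2) \<in> borel_measurable lborel" by measurable
      show "AE x in lborel. norm ((f (x + h) - f x)\<^sup>2) \<le> norm (3 * ((f (x + h) - g (x + h))\<^sup>2 + (g (x + h) - g x)\<^sup>2 + (g x - f x)\<^sup>2))"
        by (rule AE_I2) (use pw in simp)
    qed
    have "(\<integral>x. (f (x + h) - f x)\<^sup>2 \<partial>lborel) \<le> (\<integral>x. 3 * ((f (x + h) - g (x + h))\<^sup>2 + (g (x + h) - g x)\<^sup>2 + (g x - f x)\<^sup>2) \<partial>lborel)"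
      by (rule integral_mono[OF Li Si pw])
    also have "\<dots> = 3 * ((\<integral>x. (f (x + h) - g (x + h))\<^sup>2 \<partial>lborel) + (\<integral>x. (g (x + h) - g x)\<^sup>2 \<partial>lborel) + (\<integral>x. (g x - f x)\<^sup>2 \<partial>lborel))"
      using Ai Bi Ci' by simp
    also have "\<dots> < 3 * (e/9 + e/9 + e/9)"
      unfolding Aeq Ceq using gC Bsmall by simp
    also have "\<dots> = e" by simp
    finally show "(\<integral>x. (f (x + h) - f x)\<^sup>2 \<partial>lborel) < e" .
  qed
qed

lemma L2_shift: assumes "L2 f" shows "L2 (\<lambda>x. f (x - a))"
proof -
  have fm: "f \<in> borel_measurable lborel" and fi: "integrable lborel (\<lambda>x. (f x)\<^sup>2)" using assms unfolding L2_def by auto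
  have [measurable]: "f \<in> borel_measurable borel" using fm by (simp add: measurable_lborel1)
  have "(\<lambda>x. f (x - a)) \<in> borel_measurable lborel" by measurable
  moreover have "integrable lborel (\<lambda>x. (f (x - a))\<^sup>2)"
    using integrable_shift[OF fi, of "- a"] by simp
  ultimately show ?thesis unfolding L2_def by simp
qed

lemma deriv_shift_iter:
  fixes \<psi> :: "real \<Rightarrow> real"
  assumes "\<And>n x. ((deriv ^^ n) \<psi>) differentiable (at x)"
  shows "(deriv ^^ n) (\<lambda>y. \<psi> (y + a)) = (\<lambda>y. (deriv ^^ n) \<psi> (y + a))"
proof (induction n)
  case 0 then show ?case by simp
next
  case (Suc n)
  have "deriv (\<lambda>y. (deriv ^^ n) \<psi> (y + a)) y = deriv ((deriv ^^ n) \<psi>) (y + a)" for y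
  proof -
    have d: "((deriv ^^ n) \<psi> has_real_derivative deriv ((deriv ^^ n) \<psi>) (y + a)) (at (y + a))"
      using assms[of n "y + a"] by (simp add: DERIV_deriv_iff_real_differentiable)
    have "((\<lambda>y. y + a) has_real_derivative 1) (at y)" by (auto intro!: derivative_eq_intros)
    from DERIV_chain2[OF d this]
    have "((\<lambda>y. (deriv ^^ n) \<psi> (y + a)) has_real_derivative deriv ((deriv ^^ n) \<psi>) (y + a)) (at y)" by simp
    then show ?thesis by (rule DERIV_imp_deriv)
  qed
  then show ?case using Suc.IH by simp
qed

lemma test_fun1_shift:
  fixes \<psi> :: "real \<Rightarrow> real"
  assumes "test_fun1 \<psi>"
  shows "test_fun1 (\<lambda>y. \<psi> (y + a))"
proof -
  have dif: "\<And>n x. ((deriv ^^ n) \<psi>) differentiable (at x)" using assms unfolding test_fun1_def by simp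
  have cp: "compact (closure {x. \<psi> x \<noteq> 0})" using assms unfolding test_fun1_def by simp
  have "((deriv ^^ n) (\<lambda>y. \<psi> (y + a))) differentiable (at x)" for n x
  proof -
    have d: "((deriv ^^ n) \<psi> has_real_derivative deriv ((deriv ^^ n) \<psi>) (x + a)) (at (x + a))"
      using dif[of n "x + a"] by (simp add: DERIV_deriv_iff_real_differentiable)
    have "((\<lambda>y. y + a) has_real_derivative 1) (at x)" by (auto intro!: derivative_eq_intros)
    from DERIV_chain2[OF d this]
    have "((\<lambda>y. (deriv ^^ n) \<psi> (y + a)) has_real_derivative deriv ((deriv ^^ n) \<psi>) (x + a) * 1) (at x)" .
    then show ?thesis unfolding deriv_shift_iter[OF dif] using real_differentiable_def by blast
  qed
  moreover have "{y. \<psi> (y + a) \<noteq> 0} = (+) (- a) ` {x. \<psi> x \<noteq> 0}"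
  proof
    show "{y. \<psi> (y + a) \<noteq> 0} \<subseteq> (+) (- a) ` {x. \<psi> x \<noteq> 0}"
    proof
      fix y assume "y \<in> {y. \<psi> (y + a) \<noteq> 0}"
      then have "y + a \<in> {x. \<psi> x \<noteq> 0}" by simp
      then have "(- a) + (y + a) \<in> (+) (- a) ` {x. \<psi> x \<noteq> 0}" by (rule imageI)
      then show "y \<in> (+) (- a) ` {x. \<psi> x \<noteq> 0}" by simp
    qed
    show "(+) (- a) ` {x. \<psi> x \<noteq> 0} \<subseteq> {y. \<psi> (y + a) \<noteq> 0}" by auto
  qed
  then have "closure {y. \<psi> (y + a) \<noteq> 0} = (+) (- a) ` closure {x. \<psi> x \<noteq> 0}"
    by (simp add: closure_translation_subtract)
  then have "compact (closure {y. \<psi> (y + a) \<noteq> 0})" using compact_translation_subtract[OF cp, of a] by simp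
  ultimately show ?thesis unfolding test_fun1_def by simp
qed

lemma H1_shift:
  assumes H: "H1_deriv U Ux"
  shows "H1_deriv (\<lambda>x. U (x - a)) (\<lambda>x. Ux (x - a))"
  unfolding H1_deriv_def
proof (intro conjI allI impI)
  show "L2 (\<lambda>x. U (x - a))" using H unfolding H1_deriv_def by (intro L2_shift) simp
  show "L2 (\<lambda>x. Ux (x - a))" using H unfolding H1_deriv_def by (intro L2_shift) simp
  fix \<psi> assume psi: "test_fun1 \<psi>"
  have dif: "\<And>n x. ((deriv ^^ n) \<psi>) differentiable (at x)" using psi unfolding test_fun1_def by simp
  have psi': "test_fun1 (\<lambda>y. \<psi> (y + a))" by (rule test_fun1_shift[OF psi])
  have dd: "deriv (\<lambda>y. \<psi> (y + a)) = (\<lambda>y. deriv \<psi> (y + a))"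
    using deriv_shift_iter[OF dif, of 1 a] by simp
  have "(\<integral>x. U (x - a) * deriv \<psi> x \<partial>lborel) = (\<integral>x. U (x + a - a) * deriv \<psi> (x + a) \<partial>lborel)"
    using int_shift[of "\<lambda>x. U (x - a) * deriv \<psi> x" a] by simp
  also have "\<dots> = (\<integral>x. U x * deriv (\<lambda>y. \<psi> (y + a)) x \<partial>lborel)" unfolding dd by simp
  also have "\<dots> = - (\<integral>x. Ux x * \<psi> (x + a) \<partial>lborel)"
    using H psi' unfolding H1_deriv_def by blast
  also have "(\<integral>x. Ux x * \<psi> (x + a) \<partial>lborel) = (\<integral>x. Ux (x - a) * \<psi> x \<partial>lborel)"
    using int_shift[of "\<lambda>x. Ux (x - a) * \<psi> x" a] by simp
  finally show "(\<integral>x. U (x - a) * deriv \<psi> x \<partial>lborel) = - (\<integral>x. Ux (x - a) * \<psi> x \<partial>lborel)" .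
qed

lemma sq_shift: fixes U :: "real \<Rightarrow> real" shows "(\<integral>x. (U (x - a) - U (x - b))\<^sup>2 \<partial>lborel) = (\<integral>x. (U (x + (b - a)) - U x)\<^sup>2 \<partial>lborel)"
  using int_shift[of "\<lambda>x. (U (x - a) - U (x - b))\<^sup>2" b] by (simp add: algebra_simps)

lemma dist_small:
  assumes U: "L2 U" and Ux: "L2 Ux" and eps: "\<epsilon> > 0"
  shows "\<exists>\<delta>>0. \<forall>t t'. \<bar>t - t'\<bar> < \<delta> \<longrightarrow>
    H1_dist (\<lambda>x. U (x - c * (t - t0))) (\<lambda>x. Ux (x - c * (t - t0))) (\<lambda>x. U (x - c * (t' - t0))) (\<lambda>x. Ux (x - c * (t' - t0))) < \<epsilon>"
proof -
  have e2: "\<epsilon>\<^sup>2 / 2 > 0" using eps by simp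
  obtain d1 where d1: "d1 > 0" "\<And>h. \<bar>h\<bar> < d1 \<Longrightarrow> (\<integral>x. (U (x + h) - U x)\<^sup>2 \<partial>lborel) < \<epsilon>\<^sup>2 / 2"
    using L2_tcont[OF U e2] by blast
  obtain d2 where d2: "d2 > 0" "\<And>h. \<bar>h\<bar> < d2 \<Longrightarrow> (\<integral>x. (Ux (x + h) - Ux x)\<^sup>2 \<partial>lborel) < \<epsilon>\<^sup>2 / 2"
    using L2_tcont[OF Ux e2] by blast
  define \<delta> where "\<delta> = min d1 d2 / (\<bar>c\<bar> + 1)"
  have \<delta>: "\<delta> > 0" unfolding \<delta>_def using d1 d2 by simp
  show ?thesis
  proof (intro exI[of _ \<delta>] conjI allI impI \<delta>)
    fix t t' :: real assume tt: "\<bar>t - t'\<bar> < \<delta>"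
    define h where "h = c * (t' - t0) - c * (t - t0)"
    have "\<bar>h\<bar> = \<bar>c\<bar> * \<bar>t - t'\<bar>" unfolding h_def by (simp add: abs_mult[symmetric] algebra_simps abs_minus_commute)
    also have "\<dots> \<le> \<bar>c\<bar> * \<delta>" using tt by (intro mult_left_mono) auto
    also have "\<dots> < min d1 d2"
    proof -
      have "\<bar>c\<bar> * \<delta> = min d1 d2 * (\<bar>c\<bar> / (\<bar>c\<bar> + 1))" unfolding \<delta>_def by simp
      also have "\<dots> < min d1 d2 * 1" using d1 d2 by (intro mult_strict_left_mono) auto
      finally show ?thesis by simp
    qed
    finally have hs: "\<bar>h\<bar> < d1" "\<bar>h\<bar> < d2" by auto
    have A: "(\<integral>x. (U (x - c * (t - t0)) - U (x - c * (t' - t0)))\<^sup>2 \<partial>lborel) < \<epsilon>\<^sup>2 / 2"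
      unfolding sq_shift h_def[symmetric] by (rule d1(2)[OF hs(1)])
    have B: "(\<integral>x. (Ux (x - c * (t - t0)) - Ux (x - c * (t' - t0)))\<^sup>2 \<partial>lborel) < \<epsilon>\<^sup>2 / 2"
      unfolding sq_shift h_def[symmetric] by (rule d2(2)[OF hs(2)])
    have "sqrt ((\<integral>x. (U (x - c * (t - t0)) - U (x - c * (t' - t0)))\<^sup>2 \<partial>lborel) +
                (\<integral>x. (Ux (x - c * (t - t0)) - Ux (x - c * (t' - t0)))\<^sup>2 \<partial>lborel)) < sqrt (\<epsilon>\<^sup>2)"
      using A B by (intro real_sqrt_less_mono) linarith
    also have "sqrt (\<epsilon>\<^sup>2) = \<epsilon>" using eps by simp
    finally show "H1_dist (\<lambda>x. U (x - c * (t - t0))) (\<lambda>x. Ux (x - c * (t - t0))) (\<lambda>x. U (x - c * (t' - t0))) (\<lambda>x. Ux (x - c * (t' - t0))) < \<epsilon>"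
      unfolding H1_dist_def .
  qed
qed

theorem lemma4p1:
  fixes c t0 :: real and U V W Ux Vx Wx :: "real \<Rightarrow> real"
  assumes HU: "H1_deriv U Ux" and HV: "H1_deriv V Vx" and HW: "H1_deriv W Wx"
    and eqs: "\<And>\<phi>. test_fun \<phi> \<Longrightarrow>
        pair (\<lambda>t x. - c * U x) (Lop (pdx \<phi>))
          + CH_rest (\<lambda>t. U) (\<lambda>t. Ux) (\<lambda>t. V) (\<lambda>t. Vx) (\<lambda>t. W) (\<lambda>t. Wx) \<phi> = 0 \<and>
        pair (\<lambda>t x. - c * V x) (Lop (pdx \<phi>))
          + CH_rest (\<lambda>t. V) (\<lambda>t. Vx) (\<lambda>t. U) (\<lambda>t. Ux) (\<lambda>t. W) (\<lambda>t. Wx) \<phi> = 0 \<and>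
        pair (\<lambda>t x. - c * W x) (Lop (pdx \<phi>))
          + CH_rest (\<lambda>t. W) (\<lambda>t. Wx) (\<lambda>t. U) (\<lambda>t. Ux) (\<lambda>t. V) (\<lambda>t. Vx) \<phi> = 0"
    and t0: "t0 > 0"
  shows "CH3_weak_solution (\<lambda>t x. U (x - c * (t - t0))) (\<lambda>t x. V (x - c * (t - t0)))
           (\<lambda>t x. W (x - c * (t - t0)))"
  unfolding CH3_weak_solution_def
proof (rule exI[of _ "\<lambda>t x. Ux (x - c * (t - t0))"], rule exI[of _ "\<lambda>t x. Vx (x - c * (t - t0))"],
         rule exI[of _ "\<lambda>t x. Wx (x - c * (t - t0))"], intro conjI allI impI)
  have LU: "L2 U" "L2 Ux" using HU unfolding H1_deriv_def by auto
  have LV: "L2 V" "L2 Vx" using HV unfolding H1_deriv_def by auto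
  have LW: "L2 W" "L2 Wx" using HW unfolding H1_deriv_def by auto
  fix t :: real assume "t > 0"
  show "H1_deriv (\<lambda>x. U (x - c * (t - t0))) (\<lambda>x. Ux (x - c * (t - t0)))" by (rule H1_shift[OF HU])
  show "H1_deriv (\<lambda>x. V (x - c * (t - t0))) (\<lambda>x. Vx (x - c * (t - t0)))" by (rule H1_shift[OF HV])
  show "H1_deriv (\<lambda>x. W (x - c * (t - t0))) (\<lambda>x. Wx (x - c * (t - t0)))" by (rule H1_shift[OF HW])
next
  have LU: "L2 U" "L2 Ux" using HU unfolding H1_deriv_def by auto
  have LV: "L2 V" "L2 Vx" using HV unfolding H1_deriv_def by auto
  have LW: "L2 W" "L2 Wx" using HW unfolding H1_deriv_def by auto
  fix t1 :: real and \<epsilon> :: real assume "t1 > 0" and eps: "\<epsilon> > 0"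
  obtain d1 where d1: "d1 > 0" "\<And>t t'. \<bar>t - t'\<bar> < d1 \<Longrightarrow>
    H1_dist (\<lambda>x. U (x - c * (t - t0))) (\<lambda>x. Ux (x - c * (t - t0))) (\<lambda>x. U (x - c * (t' - t0))) (\<lambda>x. Ux (x - c * (t' - t0))) < \<epsilon>"
    using dist_small[OF LU eps, of c t0] by blast
  obtain d2 where d2: "d2 > 0" "\<And>t t'. \<bar>t - t'\<bar> < d2 \<Longrightarrow>
    H1_dist (\<lambda>x. V (x - c * (t - t0))) (\<lambda>x. Vx (x - c * (t - t0))) (\<lambda>x. V (x - c * (t' - t0))) (\<lambda>x. Vx (x - c * (t' - t0))) < \<epsilon>"
    using dist_small[OF LV eps, of c t0] by blast
  obtain d3 where d3: "d3 > 0" "\<And>t t'. \<bar>t - t'\<bar> < d3 \<Longrightarrow>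
    H1_dist (\<lambda>x. W (x - c * (t - t0))) (\<lambda>x. Wx (x - c * (t - t0))) (\<lambda>x. W (x - c * (t' - t0))) (\<lambda>x. Wx (x - c * (t' - t0))) < \<epsilon>"
    using dist_small[OF LW eps, of c t0] by blast
  show "\<exists>\<delta>>0. \<forall>t>0. \<bar>t - t1\<bar> < \<delta> \<longrightarrow>
        H1_dist (\<lambda>x. U (x - c * (t - t0))) (\<lambda>x. Ux (x - c * (t - t0))) (\<lambda>x. U (x - c * (t1 - t0))) (\<lambda>x. Ux (x - c * (t1 - t0))) < \<epsilon> \<and>
        H1_dist (\<lambda>x. V (x - c * (t - t0))) (\<lambda>x. Vx (x - c * (t - t0))) (\<lambda>x. V (x - c * (t1 - t0))) (\<lambda>x. Vx (x - c * (t1 - t0))) < \<epsilon> \<and>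
        H1_dist (\<lambda>x. W (x - c * (t - t0))) (\<lambda>x. Wx (x - c * (t - t0))) (\<lambda>x. W (x - c * (t1 - t0))) (\<lambda>x. Wx (x - c * (t1 - t0))) < \<epsilon>"
  proof (intro exI[of _ "min d1 (min d2 d3)"] conjI allI impI)
    show "min d1 (min d2 d3) > 0" using d1 d2 d3 by simp
    fix t :: real assume "t > 0" and tt: "\<bar>t - t1\<bar> < min d1 (min d2 d3)"
    show "H1_dist (\<lambda>x. U (x - c * (t - t0))) (\<lambda>x. Ux (x - c * (t - t0))) (\<lambda>x. U (x - c * (t1 - t0))) (\<lambda>x. Ux (x - c * (t1 - t0))) < \<epsilon>"
      using tt by (intro d1(2)) simp
    show "H1_dist (\<lambda>x. V (x - c * (t - t0))) (\<lambda>x. Vx (x - c * (t - t0))) (\<lambda>x. V (x - c * (t1 - t0))) (\<lambda>x. Vx (x - c * (t1 - t0))) < \<epsilon>"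
      using tt by (intro d2(2)) simp
    show "H1_dist (\<lambda>x. W (x - c * (t - t0))) (\<lambda>x. Wx (x - c * (t - t0))) (\<lambda>x. W (x - c * (t1 - t0))) (\<lambda>x. Wx (x - c * (t1 - t0))) < \<epsilon>"
      using tt by (intro d3(2)) simp
  qed
next
  have LU: "L2 U" using HU unfolding H1_deriv_def by auto
  have LV: "L2 V" using HV unfolding H1_deriv_def by auto
  have LW: "L2 W" using HW unfolding H1_deriv_def by auto
  fix \<phi> assume phi: "test_fun \<phi>"
  show "pair (\<lambda>t x. U (x - c * (t - t0))) (Lop (pdt \<phi>)) +
    CH_rest (\<lambda>t x. U (x - c * (t - t0))) (\<lambda>t x. Ux (x - c * (t - t0))) (\<lambda>t x. V (x - c * (t - t0)))
     (\<lambda>t x. Vx (x - c * (t - t0))) (\<lambda>t x. W (x - c * (t - t0))) (\<lambda>t x. Wx (x - c * (t - t0))) \<phi> = 0"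
    by (rule weak_eq[OF LU phi]) (use eqs in blast)
  show "pair (\<lambda>t x. V (x - c * (t - t0))) (Lop (pdt \<phi>)) +
    CH_rest (\<lambda>t x. V (x - c * (t - t0))) (\<lambda>t x. Vx (x - c * (t - t0))) (\<lambda>t x. U (x - c * (t - t0)))
     (\<lambda>t x. Ux (x - c * (t - t0))) (\<lambda>t x. W (x - c * (t - t0))) (\<lambda>t x. Wx (x - c * (t - t0))) \<phi> = 0"
    by (rule weak_eq[OF LV phi]) (use eqs in blast)
  show "pair (\<lambda>t x. W (x - c * (t - t0))) (Lop (pdt \<phi>)) +
    CH_rest (\<lambda>t x. W (x - c * (t - t0))) (\<lambda>t x. Wx (x - c * (t - t0))) (\<lambda>t x. U (x - c * (t - t0)))
     (\<lambda>t x. Ux (x - c * (t - t0))) (\<lambda>t x. V (x - c * (t - t0))) (\<lambda>t x. Vx (x - c * (t - t0))) \<phi> = 0"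
    by (rule weak_eq[OF LW phi]) (use eqs in blast)
qed

end
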